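(* Let $\mathbb K$ be an algebraically closed field and let $q\in\mathbb K$ be nonzero and not a root of unity. Let $U_q(\widehat{sl}_2)$ be the unital associative $\mathbb K$-algebra with generators $e^{\pm}_i, K_i^{\pm1}$ ($i\in\{0,1\}$) and relations $K_iK_i^{-1}=K_i^{-1}K_i=1$; $K_0K_1=K_1K_0$; $K_ie^{\pm}_iK_i^{-1}=q^{\pm2}e^{\pm}_i$; $K_ie^{\pm}_jK_i^{-1}=q^{\mp2}e^{\pm}_j$ for $i\neq j$; $[e^+_i,e^-_i]=\frac{K_i-K_i^{-1}}{q-q^{-1}}$; $[e^{\pm}_0,e^{\mp}_1]=0$; and $(e^{\pm}_i)^3e^{\pm}_j-[3]_q(e^{\pm}_i)^2e^{\pm}_je^{\pm}_i+[3]_qe^{\pm}_ie^{\pm}_j(e^{\pm}_i)^2-e^{\pm}_j(e^{\pm}_i)^3=0$ for $i\neq j$. Let $\mathcal U$ be the unital associative $\mathbb K$-algebra with generators $y^{\pm}_i, k_i^{\pm1}$ ($i\in\{0,1\}$) and relations $k_ik_i^{-1}=k_i^{-1}k_i=1$; $k_0k_1$ is central; $\frac{qy^+_ik_i-q^{-1}k_iy^+_i}{q-q^{-1}}=1$; $\frac{qk_iy^-_i-q^{-1}y^-_ik_i}{q-q^{-1}}=1$; $\frac{qy^-_iy^+_i-q^{-1}y^+_iy^-_i}{q-q^{-1}}=1$; $\frac{qy^+_iy^-_j-q^{-1}y^-_jy^+_i}{q-q^{-1}}=k_0^{-1}k_1^{-1}$ for $i\neq j$; and $(y^{\pm}_i)^3y^{\pm}_j-[3]_q(y^{\pm}_i)^2y^{\pm}_jy^{\pm}_i+[3]_qy^{\pm}_iy^{\pm}_j(y^{\pm}_i)^2-y^{\pm}_j(y^{\pm}_i)^3=0$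 for $i\neq j$. Then there is an isomorphism of $\mathbb K$-algebras $\mathcal U\to U_q(\widehat{sl}_2)$ given by $k_i^{\pm1}\mapsto K_i^{\pm1}$, $y^-_i\mapsto K_i^{-1}+e^-_i$, $y^+_i\mapsto K_i^{-1}-q(q-q^{-1})^2K_i^{-1}e^+_i$, whose inverse is given by $K_i^{\pm1}\mapsto k_i^{\pm1}$, $e^-_i\mapsto y^-_i-k_i^{-1}$, $e^+_i\mapsto \frac{1-k_iy^+_i}{q(q-q^{-1})^2}$.
   Context: $[n]_q=\frac{q^n-q^{-n}}{q-q^{-1}}$ for $n\ge 0$; $[X,Y]=XY-YX$. *)

theory Defs
  imports "HOL-Library.Poly_Mapping" "HOL-Computational_Algebra.Polynomial"
begin

text \<open>The free unital associative algebra over a field 'k on a set of generators 'g: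
  finitely supported functions from words (lists of generators) to 'k, with the
  concatenation (convolution) product.\<close>

type_synonym ('g, 'k) freealg = "'g list \<Rightarrow>\<^sub>0 'k"

definition fmul :: "('g, 'k::field) freealg \<Rightarrow> ('g, 'k) freealg \<Rightarrow> ('g, 'k) freealg"
  (infixl "\<cdot>" 70) where
  "fmul p r = (\<Sum>u\<in>Poly_Mapping.keys p. \<Sum>v\<in>Poly_Mapping.keys r. Poly_Mapping.single (u @ v) (Poly_Mapping.lookup p u * Poly_Mapping.lookup r v))"

definition cst :: "'k::field \<Rightarrow> ('g, 'k) freealg" where
  "cst c = Poly_Mapping.single [] c"

definition fone :: "('g, 'k::field) freealg" where
  "fone = cst 1"

definition gen :: "'g \<Rightarrow> ('g, 'k::field) freealg" where
  "gen a = Poly_Mapping.single [a] 1"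

definition wordval :: "('g \<Rightarrow> ('h, 'k::field) freealg) \<Rightarrow> 'g list \<Rightarrow> ('h, 'k) freealg" where
  "wordval \<phi> w = foldr (\<lambda>a acc. \<phi> a \<cdot> acc) w fone"

definition subst :: "('g \<Rightarrow> ('h, 'k::field) freealg) \<Rightarrow> ('g, 'k) freealg \<Rightarrow> ('h, 'k) freealg" where
  "subst \<phi> p = (\<Sum>w\<in>Poly_Mapping.keys p. cst (Poly_Mapping.lookup p w) \<cdot> wordval \<phi> w)"

inductive_set ideal_gen :: "('g, 'k::field) freealg set \<Rightarrow> ('g, 'k) freealg set"
  for R :: "('g, 'k) freealg set" where
  base: "r \<in> R \<Longrightarrow> r \<in> ideal_gen R"
| zero: "0 \<in> ideal_gen R"
| add: "a \<in> ideal_gen R \<Longrightarrow> b \<in> ideal_gen R \<Longrightarrow> a + b \<in> ideal_gen R"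
| mul: "a \<in> ideal_gen R \<Longrightarrow> u \<cdot> a \<cdot> v \<in> ideal_gen R"

definition alg_closed :: "'k::field itself \<Rightarrow> bool" where
  "alg_closed _ \<longleftrightarrow> (\<forall>p :: 'k poly. degree p > 0 \<longrightarrow> (\<exists>x. poly p x = 0))"

definition qint :: "'k::field \<Rightarrow> nat \<Rightarrow> 'k" where
  "qint q n = (q ^ n - inverse q ^ n) / (q - inverse q)"

datatype ix = I0 | I1
datatype sg = Pl | Mi

fun flip :: "sg \<Rightarrow> sg" where "flip Pl = Mi" | "flip Mi = Pl"

fun q2 :: "'k::field \<Rightarrow> sg \<Rightarrow> 'k" where
  "q2 q Pl = q ^ 2" | "q2 q Mi = inverse q ^ 2"

definition serre :: "'k::field \<Rightarrow> ('g, 'k) freealg \<Rightarrow> ('g, 'k) freealg \<Rightarrow> ('g, 'k) freealg" where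
  "serre q x z = x \<cdot> x \<cdot> x \<cdot> z - cst (qint q 3) \<cdot> x \<cdot> x \<cdot> z \<cdot> x
     + cst (qint q 3) \<cdot> x \<cdot> z \<cdot> x \<cdot> x - z \<cdot> x \<cdot> x \<cdot> x"

datatype gUq = E sg ix | Kp ix | Km ix  (* e^{\<pm>}_i, K_i, K_i^{-1} *)

inductive_set relUq :: "'k::field \<Rightarrow> (gUq, 'k) freealg set" for q :: 'k where
  "gen (Kp i) \<cdot> gen (Km i) - fone \<in> relUq q"
| "gen (Km i) \<cdot> gen (Kp i) - fone \<in> relUq q"
| "gen (Kp I0) \<cdot> gen (Kp I1) - gen (Kp I1) \<cdot> gen (Kp I0) \<in> relUq q"
| "gen (Kp i) \<cdot> gen (E s i) \<cdot> gen (Km i) - cst (q2 q s) \<cdot> gen (E s i) \<in> relUq q"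
| "i \<noteq> j \<Longrightarrow> gen (Kp i) \<cdot> gen (E s j) \<cdot> gen (Km i) - cst (q2 q (flip s)) \<cdot> gen (E s j) \<in> relUq q"
| "gen (E Pl i) \<cdot> gen (E Mi i) - gen (E Mi i) \<cdot> gen (E Pl i)
     - cst (1 / (q - inverse q)) \<cdot> (gen (Kp i) - gen (Km i)) \<in> relUq q"
| "gen (E s I0) \<cdot> gen (E (flip s) I1) - gen (E (flip s) I1) \<cdot> gen (E s I0) \<in> relUq q"
| "i \<noteq> j \<Longrightarrow> serre q (gen (E s i)) (gen (E s j)) \<in> relUq q"

datatype gU = Y sg ix | kp ix | km ix  (* y^{\<pm>}_i, k_i, k_i^{-1} *)

inductive_set relU :: "'k::field \<Rightarrow> (gU, 'k) freealg set" for q :: 'k where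
  "gen (kp i) \<cdot> gen (km i) - fone \<in> relU q"
| "gen (km i) \<cdot> gen (kp i) - fone \<in> relU q"
| "gen (kp I0) \<cdot> gen (kp I1) \<cdot> gen g - gen g \<cdot> gen (kp I0) \<cdot> gen (kp I1) \<in> relU q"
| "cst (1 / (q - inverse q)) \<cdot> (cst q \<cdot> gen (Y Pl i) \<cdot> gen (kp i) - cst (inverse q) \<cdot> gen (kp i) \<cdot> gen (Y Pl i))
     - fone \<in> relU q"
| "cst (1 / (q - inverse q)) \<cdot> (cst q \<cdot> gen (kp i) \<cdot> gen (Y Mi i) - cst (inverse q) \<cdot> gen (Y Mi i) \<cdot> gen (kp i))
     - fone \<in> relU q"
| "cst (1 / (q - inverse q)) \<cdot> (cst q \<cdot> gen (Y Mi i) \<cdot> gen (Y Pl i) - cst (inverse q) \<cdot> gen (Y Pl i) \<cdot> gen (Y Mi i))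
     - fone \<in> relU q"
| "i \<noteq> j \<Longrightarrow> cst (1 / (q - inverse q)) \<cdot> (cst q \<cdot> gen (Y Pl i) \<cdot> gen (Y Mi j) - cst (inverse q) \<cdot> gen (Y Mi j) \<cdot> gen (Y Pl i))
     - gen (km I0) \<cdot> gen (km I1) \<in> relU q"
| "i \<noteq> j \<Longrightarrow> serre q (gen (Y s i)) (gen (Y s j)) \<in> relU q"

fun phi :: "'k::field \<Rightarrow> gU \<Rightarrow> (gUq, 'k) freealg" where
  "phi q (kp i) = gen (Kp i)"
| "phi q (km i) = gen (Km i)"
| "phi q (Y Mi i) = gen (Km i) + gen (E Mi i)"
| "phi q (Y Pl i) = gen (Km i) - cst (q * (q - inverse q) ^ 2) \<cdot> gen (Km i) \<cdot> gen (E Pl i)"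

fun psi :: "'k::field \<Rightarrow> gUq \<Rightarrow> (gU, 'k) freealg" where
  "psi q (Kp i) = gen (kp i)"
| "psi q (Km i) = gen (km i)"
| "psi q (E Mi i) = gen (Y Mi i) - gen (km i)"
| "psi q (E Pl i) = cst (1 / (q * (q - inverse q) ^ 2)) \<cdot> (fone - gen (kp i) \<cdot> gen (Y Pl i))"

end

theory Submission
  imports Defs
begin

instantiation list :: (type) monoid_add
begin
definition zero_list :: "'a list" where "zero_list = []"
definition plus_list :: "'a list \<Rightarrow> 'a list \<Rightarrow> 'a list" where "plus_list xs ys = xs @ ys"
instance by standard (auto simp: zero_list_def plus_list_def)
end

lemma sum_single_keys: "(\<Sum>u\<in>Poly_Mapping.keys p. Poly_Mapping.single u (Poly_Mapping.lookup p u)) = p"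
proof (rule poly_mapping_eqI)
  fix k
  have "Poly_Mapping.lookup (\<Sum>u\<in>Poly_Mapping.keys p. Poly_Mapping.single u (Poly_Mapping.lookup p u)) k
     = (\<Sum>u\<in>Poly_Mapping.keys p. (if u = k then Poly_Mapping.lookup p u else 0))"
    by (simp add: lookup_sum lookup_single when_def)
  also have "\<dots> = Poly_Mapping.lookup p k"
    by (simp add: sum.delta in_keys_iff)
  finally show "Poly_Mapping.lookup (\<Sum>u\<in>Poly_Mapping.keys p. Poly_Mapping.single u (Poly_Mapping.lookup p u)) k = Poly_Mapping.lookup p k" .
qed

lemma fmul_eq: "fmul p r = p * r"
proof -
  have "fmul p r = (\<Sum>u\<in>Poly_Mapping.keys p. \<Sum>v\<in>Poly_Mapping.keys r.
      Poly_Mapping.single u (Poly_Mapping.lookup p u) * Poly_Mapping.single v (Poly_Mapping.lookup r v))"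
    by (simp add: fmul_def mult_single plus_list_def)
  also have "\<dots> = (\<Sum>u\<in>Poly_Mapping.keys p. Poly_Mapping.single u (Poly_Mapping.lookup p u) *
       (\<Sum>v\<in>Poly_Mapping.keys r. Poly_Mapping.single v (Poly_Mapping.lookup r v)))"
    by (simp add: sum_distrib_left)
  also have "\<dots> = (\<Sum>u\<in>Poly_Mapping.keys p. Poly_Mapping.single u (Poly_Mapping.lookup p u)) *
       (\<Sum>v\<in>Poly_Mapping.keys r. Poly_Mapping.single v (Poly_Mapping.lookup r v))"
    by (simp add: sum_distrib_right)
  also have "\<dots> = p * r" by (simp add: sum_single_keys)
  finally show ?thesis .
qed

lemma fone_eq: "fone = 1"
  by (simp add: fone_def cst_def zero_list_def[symmetric])

lemma cst_add: "cst (a + b) = cst a + cst b" by (simp add: cst_def single_add)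
lemma cst_mult: "cst (a * b) = cst a * cst b" by (simp add: cst_def mult_single plus_list_def)
lemma cst_uminus: "cst (- a) = - cst a" by (simp add: cst_def single_uminus)
lemma cst_diff: "cst (a - b) = cst a - cst b" by (simp add: cst_def single_diff)
lemma cst_zero: "cst 0 = 0" by (simp add: cst_def)
lemma cst_one: "cst 1 = 1" using fone_eq fone_def by metis

lemma cst_central: "cst c * p = p * (cst c :: ('g,'k::field) freealg)"
proof -
  have "cst c * Poly_Mapping.single u d = Poly_Mapping.single u d * (cst c :: ('g,'k::field) freealg)" for u d
    by (simp add: cst_def mult_single plus_list_def mult.commute)
  then have "cst c * (\<Sum>u\<in>Poly_Mapping.keys p. Poly_Mapping.single u (Poly_Mapping.lookup p u))
     = (\<Sum>u\<in>Poly_Mapping.keys p. Poly_Mapping.single u (Poly_Mapping.lookup p u)) * cst c"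
    by (simp add: sum_distrib_left sum_distrib_right)
  then show ?thesis by (simp add: sum_single_keys)
qed


lemma wordval_Nil: "wordval \<phi> [] = 1" by (simp add: wordval_def fone_eq)
lemma wordval_Cons: "wordval \<phi> (a # w) = \<phi> a * wordval \<phi> w" by (simp add: wordval_def fmul_eq)
lemma wordval_append: "wordval \<phi> (u @ v) = wordval \<phi> u * wordval \<phi> v"
  by (induction u) (simp_all add: wordval_Nil wordval_Cons mult.assoc)

lemma subst_superset:
  assumes "finite S" "Poly_Mapping.keys p \<subseteq> S"
  shows "subst \<phi> p = (\<Sum>w\<in>S. cst (Poly_Mapping.lookup p w) * wordval \<phi> w)"
  unfolding subst_def fmul_eq
  by (rule sum.mono_neutral_left) (use assms in \<open>auto simp: in_keys_iff cst_zero\<close>)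

lemma subst_add: "subst \<phi> (p + r) = subst \<phi> p + subst \<phi> r"
proof -
  let ?S = "Poly_Mapping.keys p \<union> Poly_Mapping.keys r"
  have "subst \<phi> (p + r) = (\<Sum>w\<in>?S. cst (Poly_Mapping.lookup (p + r) w) * wordval \<phi> w)"
    by (rule subst_superset) (use keys_add[of p r] in auto)
  also have "\<dots> = (\<Sum>w\<in>?S. cst (Poly_Mapping.lookup p w) * wordval \<phi> w)
      + (\<Sum>w\<in>?S. cst (Poly_Mapping.lookup r w) * wordval \<phi> w)"
    by (simp add: lookup_add cst_add distrib_right sum.distrib)
  also have "\<dots> = subst \<phi> p + subst \<phi> r"
    by (simp add: subst_superset[symmetric])
  finally show ?thesis .
qed

lemma subst_zero: "subst \<phi> 0 = 0" by (simp add: subst_def)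

lemma subst_uminus: "subst \<phi> (- p) = - subst \<phi> p"
  using subst_add[of \<phi> p "- p"] by (simp add: subst_zero eq_neg_iff_add_eq_0 add.commute)

lemma subst_diff: "subst \<phi> (p - r) = subst \<phi> p - subst \<phi> r"
  using subst_add[of \<phi> p "- r"] by (simp add: subst_uminus)

lemma subst_single: "subst \<phi> (Poly_Mapping.single w c) = cst c * wordval \<phi> w"
  by (subst subst_superset[of "{w}"]) auto

lemma subst_sum: "subst \<phi> (sum f A) = (\<Sum>a\<in>A. subst \<phi> (f a))"
  by (induction A rule: infinite_finite_induct) (simp_all add: subst_zero subst_add)

lemma cst_comm_left: "x * (cst c * y) = cst c * (x * y)"
  by (metis cst_central mult.assoc)

lemma subst_mult: "subst \<phi> (p * r) = subst \<phi> p * subst \<phi> r"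
proof -
  have "subst \<phi> (p * r) = (\<Sum>u\<in>Poly_Mapping.keys p. \<Sum>v\<in>Poly_Mapping.keys r.
        cst (Poly_Mapping.lookup p u * Poly_Mapping.lookup r v) * wordval \<phi> (u @ v))"
    by (simp add: fmul_eq[symmetric] fmul_def subst_sum subst_single)
  also have "\<dots> = (\<Sum>u\<in>Poly_Mapping.keys p. \<Sum>v\<in>Poly_Mapping.keys r.
        (cst (Poly_Mapping.lookup p u) * wordval \<phi> u) * (cst (Poly_Mapping.lookup r v) * wordval \<phi> v))"
    by (simp add: wordval_append cst_mult mult.assoc cst_comm_left[of "wordval \<phi> _"])
  also have "\<dots> = subst \<phi> p * subst \<phi> r"
    by (simp add: subst_def fmul_eq sum_product)
  finally show ?thesis .
qed

lemma subst_cst: "subst \<phi> (cst c) = cst c"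
  by (simp add: cst_def subst_single wordval_Nil)

lemma subst_one: "subst \<phi> 1 = 1"
  using subst_cst[of \<phi> 1] by (simp add: cst_one)

lemma subst_gen: "subst \<phi> (gen a) = \<phi> a"
  by (simp add: gen_def subst_single wordval_Cons wordval_Nil cst_one)

lemma single_Nil_one: "Poly_Mapping.single [] 1 = 1"
  by (metis single_one zero_list_def)

lemma wordval_gen: "wordval gen w = Poly_Mapping.single w (1::'k::field)"
  by (induction w) (simp_all add: wordval_Nil wordval_Cons gen_def mult_single plus_list_def single_Nil_one)

lemma subst_gen_id: "subst gen p = p"
proof -
  have "subst gen p = (\<Sum>u\<in>Poly_Mapping.keys p. Poly_Mapping.single u (Poly_Mapping.lookup p u))"
    unfolding subst_def fmul_eq wordval_gen
    by (simp add: cst_def mult_single plus_list_def)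
  then show ?thesis by (simp add: sum_single_keys)
qed

lemma subst_wordval: "subst \<psi> (wordval \<phi> w) = wordval (\<lambda>g. subst \<psi> (\<phi> g)) w"
  by (induction w) (simp_all add: wordval_Nil wordval_Cons subst_one subst_mult)

lemma subst_comp: "subst \<psi> (subst \<phi> p) = subst (\<lambda>g. subst \<psi> (\<phi> g)) p"
  by (simp add: subst_def[of \<phi>] fmul_eq subst_sum subst_mult subst_cst subst_wordval)
     (simp add: subst_def fmul_eq)

definition idl :: "('g, 'k::field) freealg set \<Rightarrow> bool" where
  "idl J \<longleftrightarrow> 0 \<in> J \<and> (\<forall>a\<in>J. \<forall>b\<in>J. a + b \<in> J) \<and> (\<forall>a\<in>J. \<forall>u v. u * a * v \<in> J)"

lemma idl_ideal_gen: "idl (ideal_gen R)"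
  unfolding idl_def using ideal_gen.zero ideal_gen.add ideal_gen.mul[unfolded fmul_eq] by blast

lemma idl_UNIV: "idl UNIV" by (simp add: idl_def)

lemma idl_0: "idl J \<Longrightarrow> 0 \<in> J" by (simp add: idl_def)
lemma idl_add: "idl J \<Longrightarrow> a \<in> J \<Longrightarrow> b \<in> J \<Longrightarrow> a + b \<in> J" by (simp add: idl_def)
lemma idl_mul: "idl J \<Longrightarrow> a \<in> J \<Longrightarrow> u * a * v \<in> J" by (simp add: idl_def)
lemma idl_mulL: "idl J \<Longrightarrow> a \<in> J \<Longrightarrow> u * a \<in> J" using idl_mul[of J a u 1] by simp
lemma idl_mulR: "idl J \<Longrightarrow> a \<in> J \<Longrightarrow> a * v \<in> J" using idl_mul[of J a 1 v] by simp
lemma idl_uminus: "idl J \<Longrightarrow> a \<in> J \<Longrightarrow> - a \<in> J" using idl_mulL[of J a "-1"] by simp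
lemma idl_diff: "idl J \<Longrightarrow> a \<in> J \<Longrightarrow> b \<in> J \<Longrightarrow> a - b \<in> J"
  using idl_add[of J a "- b"] idl_uminus by fastforce
lemma idl_sum: "idl J \<Longrightarrow> (\<And>x. x \<in> A \<Longrightarrow> f x \<in> J) \<Longrightarrow> sum f A \<in> J"
  by (induction A rule: infinite_finite_induct) (simp_all add: idl_0 idl_add)

lemma subst_ideal:
  assumes "\<And>r. r \<in> R \<Longrightarrow> subst \<phi> r \<in> ideal_gen R'" "p \<in> ideal_gen R"
  shows "subst \<phi> p \<in> ideal_gen R'"
  using assms(2)
proof induction
  case (base r) then show ?case using assms(1) by blast
next
  case zero then show ?case by (simp add: subst_zero ideal_gen.zero)
next
  case (add a b) then show ?case by (simp add: subst_add ideal_gen.add)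
next
  case (mul a u v) then show ?case
    using idl_mul[OF idl_ideal_gen] by (simp add: fmul_eq subst_mult)
qed

lemma wordval_cong:
  assumes "idl J" "\<And>g. \<chi> g - \<chi>' g \<in> J"
  shows "wordval \<chi> w - wordval \<chi>' w \<in> J"
proof (induction w)
  case Nil then show ?case using assms by (simp add: idl_0 wordval_Nil)
next
  case (Cons a w)
  have "wordval \<chi> (a # w) - wordval \<chi>' (a # w)
     = (\<chi> a - \<chi>' a) * wordval \<chi> w + \<chi>' a * (wordval \<chi> w - wordval \<chi>' w)"
    by (simp add: wordval_Cons algebra_simps)
  moreover have "(\<chi> a - \<chi>' a) * wordval \<chi> w \<in> J" by (rule idl_mulR[OF assms(1) assms(2)])
  moreover have "\<chi>' a * (wordval \<chi> w - wordval \<chi>' w) \<in> J" by (rule idl_mulL[OF assms(1) Cons])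
  ultimately show ?case using idl_add[OF assms(1)] by simp
qed

lemma subst_cong:
  assumes "idl J" "\<And>g. \<chi> g - \<chi>' g \<in> J"
  shows "subst \<chi> p - subst \<chi>' p \<in> J"
proof -
  have "subst \<chi> p - subst \<chi>' p = (\<Sum>w\<in>Poly_Mapping.keys p. cst (Poly_Mapping.lookup p w) * (wordval \<chi> w - wordval \<chi>' w))"
    by (simp add: subst_def fmul_eq algebra_simps sum_subtractf)
  moreover have "(\<Sum>w\<in>Poly_Mapping.keys p. cst (Poly_Mapping.lookup p w) * (wordval \<chi> w - wordval \<chi>' w)) \<in> J"
    by (rule idl_sum[OF assms(1)], rule idl_mulL[OF assms(1)], rule wordval_cong[OF assms])
  ultimately show ?thesis by simp
qed

definition goodq :: "'k::field \<Rightarrow> bool" where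
  "goodq q \<longleftrightarrow> q \<noteq> 0 \<and> q - inverse q \<noteq> 0"

definition JUq :: "'k::field \<Rightarrow> (gUq, 'k) freealg set" where
  "JUq q = (if goodq q then ideal_gen (relUq q) else UNIV)"

lemma idl_JUq: "idl (JUq q)"
  by (simp add: JUq_def idl_ideal_gen idl_UNIV)

definition eqUq :: "('k::field \<Rightarrow> (gUq, 'k) freealg) \<Rightarrow> ('k \<Rightarrow> (gUq, 'k) freealg) \<Rightarrow> bool" where
  "eqUq F G \<longleftrightarrow> (\<forall>q. F q - G q \<in> JUq q)"

lemma eqUq_refl: "eqUq F F"
  by (simp add: eqUq_def idl_0[OF idl_JUq])

lemma equivp_eqUq: "equivp eqUq"
proof (rule equivpI)
  show "reflp eqUq" by (simp add: reflp_def eqUq_refl)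
  show "symp eqUq" unfolding symp_def eqUq_def
    by (metis idl_uminus[OF idl_JUq] minus_diff_eq)
  show "transp eqUq" unfolding transp_def eqUq_def
  proof (intro allI impI)
    fix F G H q assume "\<forall>q. F q - G q \<in> JUq q" "\<forall>q. G q - H q \<in> JUq q"
    then have "(F q - G q) + (G q - H q) \<in> JUq q" using idl_add[OF idl_JUq] by blast
    then show "F q - H q \<in> JUq q" by simp
  qed
qed

quotient_type (overloaded) 'k QUq = "'k::field \<Rightarrow> (gUq, 'k) freealg" / eqUq
  by (rule equivp_eqUq)

instantiation QUq :: (field) "{ring, monoid_mult}"
begin
lift_definition zero_QUq :: "'a QUq" is "\<lambda>q. 0" .
lift_definition one_QUq :: "'a QUq" is "\<lambda>q. 1" .
lift_definition plus_QUq :: "'a QUq \<Rightarrow> 'a QUq \<Rightarrow> 'a QUq" is "\<lambda>F G q. F q + G q"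
proof -
  fix F F' G G' :: "'a \<Rightarrow> (gUq, 'a) freealg"
  assume "eqUq F F'" "eqUq G G'"
  then show "eqUq (\<lambda>q. F q + G q) (\<lambda>q. F' q + G' q)" unfolding eqUq_def
    using idl_add[OF idl_JUq] by (metis add_diff_add)
qed
lift_definition uminus_QUq :: "'a QUq \<Rightarrow> 'a QUq" is "\<lambda>F q. - F q"
  unfolding eqUq_def using idl_uminus[OF idl_JUq] by (metis minus_diff_eq minus_diff_minus)
lift_definition minus_QUq :: "'a QUq \<Rightarrow> 'a QUq \<Rightarrow> 'a QUq" is "\<lambda>F G q. F q - G q"
proof -
  fix F F' G G' :: "'a \<Rightarrow> (gUq, 'a) freealg"
  assume "eqUq F F'" "eqUq G G'"
  then show "eqUq (\<lambda>q. F q - G q) (\<lambda>q. F' q - G' q)" unfolding eqUq_def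
  proof (intro allI)
    fix q
    have "F q - G q - (F' q - G' q) = (F q - F' q) - (G q - G' q)" by (simp add: algebra_simps)
    then show "F q - G q - (F' q - G' q) \<in> JUq q"
      using idl_diff[OF idl_JUq] \<open>eqUq F F'\<close> \<open>eqUq G G'\<close> unfolding eqUq_def by metis
  qed
qed
lift_definition times_QUq :: "'a QUq \<Rightarrow> 'a QUq \<Rightarrow> 'a QUq" is "\<lambda>F G q. F q * G q"
proof -
  fix F F' G G' :: "'a \<Rightarrow> (gUq, 'a) freealg"
  assume a: "eqUq F F'" "eqUq G G'"
  show "eqUq (\<lambda>q. F q * G q) (\<lambda>q. F' q * G' q)" unfolding eqUq_def
  proof
    fix q
    have "F q * G q - F' q * G' q = (F q - F' q) * G q + F' q * (G q - G' q)"
      by (simp add: algebra_simps)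
    moreover have "(F q - F' q) * G q \<in> JUq q" using a idl_mulR[OF idl_JUq] unfolding eqUq_def by blast
    moreover have "F' q * (G q - G' q) \<in> JUq q" using a idl_mulL[OF idl_JUq] unfolding eqUq_def by blast
    ultimately show "F q * G q - F' q * G' q \<in> JUq q" using idl_add[OF idl_JUq] by simp
  qed
qed
instance
  by standard (transfer; simp add: eqUq_refl algebra_simps)+
end


lemma absUq_add: "abs_QUq (\<lambda>q. F q + G q) = abs_QUq F + abs_QUq G" by (simp add: plus_QUq.abs_eq)
lemma absUq_diff: "abs_QUq (\<lambda>q. F q - G q) = abs_QUq F - abs_QUq G" by (simp add: minus_QUq.abs_eq)
lemma absUq_mult: "abs_QUq (\<lambda>q. F q * G q) = abs_QUq F * abs_QUq G" by (simp add: times_QUq.abs_eq)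
lemma absUq_uminus: "abs_QUq (\<lambda>q. - F q) = - abs_QUq F" by (simp add: uminus_QUq.abs_eq)
lemma absUq_one: "abs_QUq (\<lambda>q. 1) = 1" by (simp add: one_QUq.abs_eq)
lemma absUq_zero: "abs_QUq (\<lambda>q. 0) = 0" by (simp add: zero_QUq.abs_eq)

lemma absUq_eq0:
  assumes "abs_QUq F = 0" "goodq q" shows "F q \<in> ideal_gen (relUq q)"
proof -
  have "abs_QUq F = abs_QUq (\<lambda>q. 0)" using assms absUq_zero by simp
  then have "eqUq F (\<lambda>q. 0)" by (simp only: QUq.abs_eq_iff)
  then have "F q - 0 \<in> JUq q" unfolding eqUq_def by blast
  then show ?thesis using assms(2) by (simp add: JUq_def)
qed

lemma absUq_rel:
  assumes "\<And>q. goodq q \<Longrightarrow> r q \<in> relUq q" shows "abs_QUq r = 0"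
proof -
  have "eqUq r (\<lambda>q. 0)" unfolding eqUq_def JUq_def using assms ideal_gen.base by auto
  then have "abs_QUq r = abs_QUq (\<lambda>q. 0)" by (simp only: QUq.abs_eq_iff)
  then show ?thesis by (simp add: absUq_zero)
qed

definition scUq :: "('k::field \<Rightarrow> 'k) \<Rightarrow> 'k QUq" where "scUq c = abs_QUq (\<lambda>q. cst (c q))"

lemma absUq_cst: "abs_QUq (\<lambda>q. cst (c q)) = scUq c" by (simp add: scUq_def)

lemma scUq_central: "scUq c * x = x * scUq c"
  unfolding scUq_def by transfer (simp add: cst_central eqUq_refl)

lemma scUq_mult: "scUq (\<lambda>q. c q * d q) = scUq c * scUq d"
  by (simp add: scUq_def cst_mult absUq_mult)
lemma scUq_add: "scUq (\<lambda>q. c q + d q) = scUq c + scUq d"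
  by (simp add: scUq_def cst_add absUq_add)
lemma scUq_diff: "scUq (\<lambda>q. c q - d q) = scUq c - scUq d"
  by (simp add: scUq_def cst_diff absUq_diff)
lemma scUq_one: "scUq (\<lambda>q. 1) = 1"
  by (simp add: scUq_def cst_one absUq_one)
lemma scUq_cong: "(\<And>q. goodq q \<Longrightarrow> c q = d q) \<Longrightarrow> scUq c = scUq d"
  unfolding scUq_def QUq.abs_eq_iff eqUq_def JUq_def
  by (auto simp: idl_0[OF idl_ideal_gen])

definition JU :: "'k::field \<Rightarrow> (gU, 'k) freealg set" where
  "JU q = (if goodq q then ideal_gen (relU q) else UNIV)"

lemma idl_JU: "idl (JU q)"
  by (simp add: JU_def idl_ideal_gen idl_UNIV)

definition eqU :: "('k::field \<Rightarrow> (gU, 'k) freealg) \<Rightarrow> ('k \<Rightarrow> (gU, 'k) freealg) \<Rightarrow> bool" where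
  "eqU F G \<longleftrightarrow> (\<forall>q. F q - G q \<in> JU q)"

lemma eqU_refl: "eqU F F"
  by (simp add: eqU_def idl_0[OF idl_JU])

lemma equivp_eqU: "equivp eqU"
proof (rule equivpI)
  show "reflp eqU" by (simp add: reflp_def eqU_refl)
  show "symp eqU" unfolding symp_def eqU_def
    by (metis idl_uminus[OF idl_JU] minus_diff_eq)
  show "transp eqU" unfolding transp_def eqU_def
  proof (intro allI impI)
    fix F G H q assume "\<forall>q. F q - G q \<in> JU q" "\<forall>q. G q - H q \<in> JU q"
    then have "(F q - G q) + (G q - H q) \<in> JU q" using idl_add[OF idl_JU] by blast
    then show "F q - H q \<in> JU q" by simp
  qed
qed

quotient_type (overloaded) 'k QU = "'k::field \<Rightarrow> (gU, 'k) freealg" / eqU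
  by (rule equivp_eqU)

instantiation QU :: (field) "{ring, monoid_mult}"
begin
lift_definition zero_QU :: "'a QU" is "\<lambda>q. 0" .
lift_definition one_QU :: "'a QU" is "\<lambda>q. 1" .
lift_definition plus_QU :: "'a QU \<Rightarrow> 'a QU \<Rightarrow> 'a QU" is "\<lambda>F G q. F q + G q"
proof -
  fix F F' G G' :: "'a \<Rightarrow> (gU, 'a) freealg"
  assume "eqU F F'" "eqU G G'"
  then show "eqU (\<lambda>q. F q + G q) (\<lambda>q. F' q + G' q)" unfolding eqU_def
    using idl_add[OF idl_JU] by (metis add_diff_add)
qed
lift_definition uminus_QU :: "'a QU \<Rightarrow> 'a QU" is "\<lambda>F q. - F q"
  unfolding eqU_def using idl_uminus[OF idl_JU] by (metis minus_diff_eq minus_diff_minus)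
lift_definition minus_QU :: "'a QU \<Rightarrow> 'a QU \<Rightarrow> 'a QU" is "\<lambda>F G q. F q - G q"
proof -
  fix F F' G G' :: "'a \<Rightarrow> (gU, 'a) freealg"
  assume "eqU F F'" "eqU G G'"
  then show "eqU (\<lambda>q. F q - G q) (\<lambda>q. F' q - G' q)" unfolding eqU_def
  proof (intro allI)
    fix q
    have "F q - G q - (F' q - G' q) = (F q - F' q) - (G q - G' q)" by (simp add: algebra_simps)
    then show "F q - G q - (F' q - G' q) \<in> JU q"
      using idl_diff[OF idl_JU] \<open>eqU F F'\<close> \<open>eqU G G'\<close> unfolding eqU_def by metis
  qed
qed
lift_definition times_QU :: "'a QU \<Rightarrow> 'a QU \<Rightarrow> 'a QU" is "\<lambda>F G q. F q * G q"
proof -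
  fix F F' G G' :: "'a \<Rightarrow> (gU, 'a) freealg"
  assume a: "eqU F F'" "eqU G G'"
  show "eqU (\<lambda>q. F q * G q) (\<lambda>q. F' q * G' q)" unfolding eqU_def
  proof
    fix q
    have "F q * G q - F' q * G' q = (F q - F' q) * G q + F' q * (G q - G' q)"
      by (simp add: algebra_simps)
    moreover have "(F q - F' q) * G q \<in> JU q" using a idl_mulR[OF idl_JU] unfolding eqU_def by blast
    moreover have "F' q * (G q - G' q) \<in> JU q" using a idl_mulL[OF idl_JU] unfolding eqU_def by blast
    ultimately show "F q * G q - F' q * G' q \<in> JU q" using idl_add[OF idl_JU] by simp
  qed
qed
instance
  by standard (transfer; simp add: eqU_refl algebra_simps)+
end


lemma absU_add: "abs_QU (\<lambda>q. F q + G q) = abs_QU F + abs_QU G" by (simp add: plus_QU.abs_eq)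
lemma absU_diff: "abs_QU (\<lambda>q. F q - G q) = abs_QU F - abs_QU G" by (simp add: minus_QU.abs_eq)
lemma absU_mult: "abs_QU (\<lambda>q. F q * G q) = abs_QU F * abs_QU G" by (simp add: times_QU.abs_eq)
lemma absU_uminus: "abs_QU (\<lambda>q. - F q) = - abs_QU F" by (simp add: uminus_QU.abs_eq)
lemma absU_one: "abs_QU (\<lambda>q. 1) = 1" by (simp add: one_QU.abs_eq)
lemma absU_zero: "abs_QU (\<lambda>q. 0) = 0" by (simp add: zero_QU.abs_eq)

lemma absU_eq0:
  assumes "abs_QU F = 0" "goodq q" shows "F q \<in> ideal_gen (relU q)"
proof -
  have "abs_QU F = abs_QU (\<lambda>q. 0)" using assms absU_zero by simp
  then have "eqU F (\<lambda>q. 0)" by (simp only: QU.abs_eq_iff)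
  then have "F q - 0 \<in> JU q" unfolding eqU_def by blast
  then show ?thesis using assms(2) by (simp add: JU_def)
qed

lemma absU_rel:
  assumes "\<And>q. goodq q \<Longrightarrow> r q \<in> relU q" shows "abs_QU r = 0"
proof -
  have "eqU r (\<lambda>q. 0)" unfolding eqU_def JU_def using assms ideal_gen.base by auto
  then have "abs_QU r = abs_QU (\<lambda>q. 0)" by (simp only: QU.abs_eq_iff)
  then show ?thesis by (simp add: absU_zero)
qed

definition scU :: "('k::field \<Rightarrow> 'k) \<Rightarrow> 'k QU" where "scU c = abs_QU (\<lambda>q. cst (c q))"

lemma absU_cst: "abs_QU (\<lambda>q. cst (c q)) = scU c" by (simp add: scU_def)

lemma scU_central: "scU c * x = x * scU c"
  unfolding scU_def by transfer (simp add: cst_central eqU_refl)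

lemma scU_mult: "scU (\<lambda>q. c q * d q) = scU c * scU d"
  by (simp add: scU_def cst_mult absU_mult)
lemma scU_add: "scU (\<lambda>q. c q + d q) = scU c + scU d"
  by (simp add: scU_def cst_add absU_add)
lemma scU_diff: "scU (\<lambda>q. c q - d q) = scU c - scU d"
  by (simp add: scU_def cst_diff absU_diff)
lemma scU_one: "scU (\<lambda>q. 1) = 1"
  by (simp add: scU_def cst_one absU_one)
lemma scU_cong: "(\<And>q. goodq q \<Longrightarrow> c q = d q) \<Longrightarrow> scU c = scU d"
  unfolding scU_def QU.abs_eq_iff eqU_def JU_def
  by (auto simp: idl_0[OF idl_ideal_gen])

lemma ctx: "(x::'a::semigroup_mult) * y = z \<Longrightarrow> x * (y * w) = z * w"
  by (metis mult.assoc)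

definition serreR :: "'a::{ring,monoid_mult} \<Rightarrow> 'a \<Rightarrow> 'a \<Rightarrow> 'a" where
  "serreR t x z = x*x*x*z - t*x*x*z*x + t*x*z*x*x - z*x*x*x"

lemma AS1:
  fixes a b e f L Li :: "'a::{ring,monoid_mult}"
  assumes ab: "b*a = a*b"
  and ea: "e*a = L*(a*e)" and eb: "e*b = Li*(b*e)" and fa: "f*a = Li*(a*f)" and fb: "f*b = L*(b*f)"
  and LLi: "L*Li = 1" and LiL: "Li*L = 1"
  and cLa: "a*L = L*a" and cLb: "b*L = L*b" and cLe: "e*L = L*e" and cLf: "f*L = L*f"
  and cLia: "a*Li = Li*a" and cLib: "b*Li = Li*b" and cLie: "e*Li = Li*e" and cLif: "f*Li = Li*f"
  shows "serreR (L + 1 + Li) (a+e) (b+f) = serreR (L + 1 + Li) e f"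
proof -
  note rules = ab ea eb fa fb LLi LiL cLa cLb cLe cLf cLia cLib cLie cLif
  show ?thesis unfolding serreR_def
    by (simp add: algebra_simps rules rules[THEN ctx])
qed

lemma AS2:
  fixes a b e f L Li c :: "'a::{ring,monoid_mult}"
  assumes ab: "b*a = a*b"
  and ea: "e*a = L*(a*e)" and eb: "e*b = Li*(b*e)" and fa: "f*a = Li*(a*f)" and fb: "f*b = L*(b*f)"
  and LLi: "L*Li = 1" and LiL: "Li*L = 1"
  and cLa: "a*L = L*a" and cLb: "b*L = L*b" and cLe: "e*L = L*e" and cLf: "f*L = L*f"
  and cLia: "a*Li = Li*a" and cLib: "b*Li = Li*b" and cLie: "e*Li = Li*e" and cLif: "f*Li = Li*f"
  and cca: "a*c = c*a" and ccb: "b*c = c*b" and cce: "e*c = c*e" and ccf: "f*c = c*f"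
  and ccL: "L*c = c*L" and ccLi: "Li*c = c*Li"
  shows "serreR (L + 1 + Li) (c*(a*e)) (c*(b*f)) = c*(c*(c*(c*(a*(a*(a*(b*serreR (L + 1 + Li) e f)))))))"
proof -
  note rules = ab ea eb fa fb LLi LiL cLa cLb cLe cLf cLia cLib cLie cLif cca ccb cce ccf ccL ccLi
  show ?thesis unfolding serreR_def
    by (simp add: algebra_simps rules rules[THEN ctx])
qed

lemma conj_rule:
  fixes k ki e l li :: "'a::{ring,monoid_mult}"
  assumes kki: "k*ki = 1" and kik: "ki*k = 1" and c: "k*e*ki = l*e" and cen: "\<And>x. l*x = x*l" and lil: "li*l = 1"
  shows "e*ki = l*(ki*e)" and "e*k = li*(k*e)"
proof -
  have "e*ki = (ki*k)*e*ki" using kik by simp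
  also have "\<dots> = ki*(k*e*ki)" by (simp add: mult.assoc)
  also have "\<dots> = ki*(l*e)" using c by simp
  also have "\<dots> = l*(ki*e)" using cen by (metis mult.assoc)
  finally show "e*ki = l*(ki*e)" .
  have "e*k = (li*l)*e*k" using lil by simp
  also have "\<dots> = li*((l*e)*k)" by (simp add: mult.assoc)
  also have "\<dots> = li*((k*e*ki)*k)" using c by simp
  also have "\<dots> = li*(k*e*(ki*k))" by (simp add: mult.assoc)
  also have "\<dots> = li*(k*e)" using kik by simp
  finally show "e*k = li*(k*e)" .
qed

lemma comm_inv:
  fixes a b c :: "'a::{ring,monoid_mult}"
  assumes "a*b = b*a" "b*c = 1" "c*b = 1"
  shows "a*c = c*a"
proof -
  have "a*c = (c*b)*a*c" using assms by simp
  also have "\<dots> = c*(a*b)*c" using assms(1) by (simp add: mult.assoc)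
  also have "\<dots> = c*a" using assms(2) by (simp add: mult.assoc)
  finally show ?thesis .
qed

definition KK :: "ix \<Rightarrow> 'k::field QUq" where "KK i = abs_QUq (\<lambda>q. gen (Kp i))"
definition KI :: "ix \<Rightarrow> 'k::field QUq" where "KI i = abs_QUq (\<lambda>q. gen (Km i))"
definition EE :: "sg \<Rightarrow> ix \<Rightarrow> 'k::field QUq" where "EE s i = abs_QUq (\<lambda>q. gen (E s i))"
definition QQ :: "'k::field QUq" where "QQ = scUq (\<lambda>q. q)"
definition QI :: "'k::field QUq" where "QI = scUq (\<lambda>q. inverse q)"
definition DD :: "'k::field QUq" where "DD = scUq (\<lambda>q. 1 / (q - inverse q))"
definition CC :: "'k::field QUq" where "CC = scUq (\<lambda>q. q * (q - inverse q) ^ 2)"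
definition TT :: "'k::field QUq" where "TT = scUq (\<lambda>q. qint q 3)"

lemma absUq_gens:
  "abs_QUq (\<lambda>q. gen (Kp i)) = KK i" "abs_QUq (\<lambda>q. gen (Km i)) = KI i" "abs_QUq (\<lambda>q. gen (E s i)) = EE s i"
  by (simp_all add: KK_def KI_def EE_def)

lemma scUq_fold:
  "scUq (\<lambda>q. q) = QQ" "scUq (\<lambda>q. inverse q) = QI" "scUq (\<lambda>q. 1 / (q - inverse q)) = DD"
  "scUq (\<lambda>q. q * (q - inverse q) ^ 2) = CC" "scUq (\<lambda>q. qint q 3) = TT"
  by (simp_all add: QQ_def QI_def DD_def CC_def TT_def)

lemma QQ_QI: "QQ * QI = (1 :: 'k::field QUq)"
proof -
  have "QQ * QI = scUq (\<lambda>q. q * inverse q :: 'k)" by (simp add: scUq_mult QQ_def QI_def)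
  also have "\<dots> = scUq (\<lambda>q. 1)" by (rule scUq_cong) (simp add: goodq_def)
  finally show ?thesis by (simp add: scUq_one)
qed
lemma QI_QQ: "QI * QQ = (1 :: 'k::field QUq)"
  using QQ_QI by (metis QQ_def scUq_central)

lemma goodq_D: "goodq q \<Longrightarrow> q \<noteq> 0 \<and> q - inverse q \<noteq> 0 \<and> q * q - 1 \<noteq> 0"
proof -
  assume g: "goodq q"
  then have q0: "q \<noteq> 0" and q1: "q - inverse q \<noteq> 0" by (auto simp: goodq_def)
  have "q * (q - inverse q) = q * q - 1" using q0 by (simp add: right_diff_distrib)
  then show ?thesis using q0 q1 by (metis mult_eq_0_iff)
qed

lemma DD_QQ: "DD * QQ = (1 :: 'k::field QUq) + DD * QI"
proof -
  have "DD * QQ - DD * QI = scUq (\<lambda>q. 1 / (q - inverse q) * q - 1 / (q - inverse q) * inverse q :: 'k)"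
    by (simp only: DD_def QQ_def QI_def scUq_mult[symmetric] scUq_diff[symmetric])
  also have "\<dots> = scUq (\<lambda>q. 1)"
  proof (rule scUq_cong)
    fix q :: 'k assume "goodq q"
    then have q1: "q - inverse q \<noteq> 0" using goodq_D by blast
    have "1 / (q - inverse q) * q - 1 / (q - inverse q) * inverse q = 1 / (q - inverse q) * (q - inverse q)"
      by (simp add: right_diff_distrib)
    then show "1 / (q - inverse q) * q - 1 / (q - inverse q) * inverse q = 1" using q1 by simp
  qed
  finally show ?thesis by (simp add: scUq_one algebra_simps)
qed

lemma DD_CC: "DD * CC = QQ * QQ - (1 :: 'k::field QUq)"
proof -
  have "DD * CC = scUq (\<lambda>q. 1 / (q - inverse q) * (q * (q - inverse q) ^ 2) :: 'k)"
    by (simp only: DD_def CC_def scUq_mult[symmetric])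
  also have "\<dots> = scUq (\<lambda>q. q * q - 1)"
  proof (rule scUq_cong)
    fix q :: 'k assume "goodq q"
    then have q0: "q \<noteq> 0" and q1: "q - inverse q \<noteq> 0" using goodq_D by blast+
    have "1 / (q - inverse q) * (q * (q - inverse q) ^ 2) = q * (q - inverse q)"
      using q1 by (simp add: power2_eq_square)
    also have "\<dots> = q * q - 1" using q0 by (simp add: right_diff_distrib)
    finally show "1 / (q - inverse q) * (q * (q - inverse q) ^ 2) = q * q - 1" .
  qed
  finally show ?thesis by (simp add: scUq_one scUq_diff scUq_mult QQ_def)
qed

lemma TT_eq: "TT = QQ * QQ + 1 + QI * (QI :: 'k::field QUq)"
proof -
  have "TT = scUq (\<lambda>q. q * q + 1 + inverse q * inverse q :: 'k)"
    unfolding TT_def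
  proof (rule scUq_cong)
    fix q :: 'k assume g: "goodq q"
    then have q0: "q \<noteq> 0" and q1: "q - inverse q \<noteq> 0" by (auto simp: goodq_def)
    have qr: "q * inverse q = 1" using q0 by simp
    have e: "(q * q + 1 + inverse q * inverse q) * (q - inverse q) = q ^ 3 - inverse q ^ 3"
      using qr by algebra
    have "qint q 3 = (q ^ 3 - inverse q ^ 3) / (q - inverse q)" by (simp add: qint_def)
    also have "\<dots> = q * q + 1 + inverse q * inverse q" using q1 by (simp add: e[symmetric])
    finally show "qint q 3 = q * q + 1 + inverse q * inverse q" .
  qed
  then show ?thesis by (simp add: scUq_add scUq_mult scUq_one QQ_def QI_def)
qed

lemma q2_Pl: "scUq (\<lambda>q. q2 q Pl) = QQ * (QQ :: 'k::field QUq)"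
  by (simp add: QQ_def scUq_mult[symmetric] power2_eq_square)
lemma q2_Mi: "scUq (\<lambda>q. q2 q Mi) = QI * (QI :: 'k::field QUq)"
  by (simp add: QI_def scUq_mult[symmetric] power2_eq_square)

lemma cenUq:
  "KK i * QQ = QQ * KK i"
  "KK i * QI = QI * KK i"
  "KK i * DD = DD * KK i"
  "KK i * CC = CC * KK i"
  "KI i * QQ = QQ * KI i"
  "KI i * QI = QI * KI i"
  "KI i * DD = DD * KI i"
  "KI i * CC = CC * KI i"
  "EE s i * QQ = QQ * EE s i"
  "EE s i * QI = QI * EE s i"
  "EE s i * DD = DD * EE s i"
  "EE s i * CC = CC * EE s i"
  by (simp_all add: QQ_def QI_def DD_def CC_def scUq_central)

lemma scal_orderUq:
  "CC * DD = DD * CC" "QQ * DD = DD * QQ" "QI * DD = DD * QI" "QQ * CC = CC * QQ" "QI * CC = CC * QI"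
  unfolding QQ_def QI_def DD_def CC_def by (rule scUq_central)+

lemma KK_KI: "KK i * KI i = 1"
proof -
  have "abs_QUq (\<lambda>q. gen (Kp i) \<cdot> gen (Km i) - fone) = 0"
    by (rule absUq_rel) (rule relUq.intros)
  then show ?thesis by (simp only: fmul_eq fone_eq absUq_diff absUq_mult absUq_one absUq_gens) simp
qed

lemma KI_KK: "KI i * KK i = 1"
proof -
  have "abs_QUq (\<lambda>q. gen (Km i) \<cdot> gen (Kp i) - fone) = 0"
    by (rule absUq_rel) (rule relUq.intros)
  then show ?thesis by (simp only: fmul_eq fone_eq absUq_diff absUq_mult absUq_one absUq_gens) simp
qed

lemma KK01: "KK I1 * KK I0 = KK I0 * KK I1"
proof -
  have "abs_QUq (\<lambda>q. gen (Kp I0) \<cdot> gen (Kp I1) - gen (Kp I1) \<cdot> gen (Kp I0)) = 0"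
    by (rule absUq_rel) (rule relUq.intros)
  then show ?thesis by (simp only: fmul_eq fone_eq absUq_diff absUq_mult absUq_one absUq_gens right_minus_eq) (rule sym)
qed

lemma Kcomm:
  "KK I1 * KI I0 = KI I0 * KK I1" "KI I1 * KK I0 = KK I0 * KI I1" "KI I1 * KI I0 = KI I0 * KI I1"
proof -
  show 1: "KK I1 * KI I0 = KI I0 * KK I1"
    by (rule comm_inv[OF KK01 KK_KI KI_KK])
  have "KK I0 * KI I1 = KI I1 * KK I0"
    by (rule comm_inv[OF KK01[symmetric] KK_KI KI_KK])
  then show 2: "KI I1 * KK I0 = KK I0 * KI I1" by (rule sym)
  have "KI I0 * KI I1 = KI I1 * KI I0"
    by (rule comm_inv[OF 1[symmetric] KK_KI KI_KK])
  then show "KI I1 * KI I0 = KI I0 * KI I1" by (rule sym)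
qed

lemma KE_rel: "KK i * EE s i * KI i = scUq (\<lambda>q. q2 q s) * EE s i"
proof -
  have "abs_QUq (\<lambda>q. gen (Kp i) \<cdot> gen (E s i) \<cdot> gen (Km i) - cst (q2 q s) \<cdot> gen (E s i)) = 0"
    by (rule absUq_rel) (rule relUq.intros)
  then show ?thesis by (simp only: fmul_eq absUq_diff absUq_mult absUq_cst absUq_gens) simp
qed

lemma KE_rel2: "i \<noteq> j \<Longrightarrow> KK i * EE s j * KI i = scUq (\<lambda>q. q2 q (flip s)) * EE s j"
proof -
  assume ij: "i \<noteq> j"
  have "abs_QUq (\<lambda>q. gen (Kp i) \<cdot> gen (E s j) \<cdot> gen (Km i) - cst (q2 q (flip s)) \<cdot> gen (E s j)) = 0"
    by (rule absUq_rel, rule relUq.intros(5), rule ij)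
  then show ?thesis by (simp only: fmul_eq absUq_diff absUq_mult absUq_cst absUq_gens) simp
qed

lemma cenQQ2: "QQ*QQ*x = x*(QQ*QQ :: 'k::field QUq)"
  by (metis QQ_def scUq_central mult.assoc)
lemma cenQI2: "QI*QI*x = x*(QI*QI :: 'k::field QUq)"
  by (metis QI_def scUq_central mult.assoc)
lemma QI2QQ2: "QI*QI*(QQ*QQ) = (1::'k::field QUq)"
proof -
  have "QI*QI*(QQ*QQ) = QI*(QI*QQ)*(QQ::'k QUq)" by (simp only: mult.assoc)
  then show ?thesis by (simp add: QI_QQ)
qed
lemma QQ2QI2: "QQ*QQ*(QI*QI) = (1::'k::field QUq)"
proof -
  have "QQ*QQ*(QI*QI) = QQ*(QQ*QI)*(QI::'k QUq)" by (simp only: mult.assoc)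
  then show ?thesis by (simp add: QQ_QI)
qed

lemma KE_Pl: "KK i * EE Pl i * KI i = QQ*QQ * EE Pl i" using KE_rel[of i Pl] by (simp only: q2_Pl)
lemma KE_Mi: "KK i * EE Mi i * KI i = QI*QI * EE Mi i" using KE_rel[of i Mi] by (simp only: q2_Mi)
lemma KE_Pl2: assumes "i \<noteq> j" shows "KK i * EE Pl j * KI i = QI*QI * EE Pl j" using KE_rel2[OF assms, of Pl] by (simp only: q2_Mi flip.simps)
lemma KE_Mi2: assumes "i \<noteq> j" shows "KK i * EE Mi j * KI i = QQ*QQ * EE Mi j" using KE_rel2[OF assms, of Mi] by (simp only: q2_Pl flip.simps)

lemma EK_same:
  "EE Pl i * KI i = QQ*(QQ*(KI i * EE Pl i))" "EE Pl i * KK i = QI*(QI*(KK i * EE Pl i))"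
  "EE Mi i * KI i = QI*(QI*(KI i * EE Mi i))" "EE Mi i * KK i = QQ*(QQ*(KK i * EE Mi i))"
  using conj_rule[OF KK_KI KI_KK KE_Pl cenQQ2 QI2QQ2] conj_rule[OF KK_KI KI_KK KE_Mi cenQI2 QQ2QI2]
  by (simp_all add: mult.assoc)

lemma EK_diff:
  assumes "i \<noteq> j"
  shows "EE Pl j * KI i = QI*(QI*(KI i * EE Pl j))" "EE Pl j * KK i = QQ*(QQ*(KK i * EE Pl j))"
  "EE Mi j * KI i = QQ*(QQ*(KI i * EE Mi j))" "EE Mi j * KK i = QI*(QI*(KK i * EE Mi j))"
  using conj_rule[OF KK_KI KI_KK KE_Pl2[OF assms] cenQI2 QQ2QI2] conj_rule[OF KK_KI KI_KK KE_Mi2[OF assms] cenQQ2 QI2QQ2]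
  by (simp_all add: mult.assoc)

lemma EPM: "EE Pl i * EE Mi i = EE Mi i * EE Pl i + DD * KK i - DD * KI i"
proof -
  have "abs_QUq (\<lambda>q. gen (E Pl i) \<cdot> gen (E Mi i) - gen (E Mi i) \<cdot> gen (E Pl i)
     - cst (1 / (q - inverse q)) \<cdot> (gen (Kp i) - gen (Km i))) = 0"
    by (rule absUq_rel) (rule relUq.intros)
  then show ?thesis
    by (simp only: fmul_eq absUq_diff absUq_mult absUq_cst absUq_gens scUq_fold) (simp add: algebra_simps)
qed

lemma EPM_cross: "EE Pl I0 * EE Mi I1 = EE Mi I1 * EE Pl I0" "EE Pl I1 * EE Mi I0 = EE Mi I0 * EE Pl I1"
proof -
  have "abs_QUq (\<lambda>q. gen (E Pl I0) \<cdot> gen (E (flip Pl) I1) - gen (E (flip Pl) I1) \<cdot> gen (E Pl I0)) = 0"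
    by (rule absUq_rel) (rule relUq.intros)
  then show "EE Pl I0 * EE Mi I1 = EE Mi I1 * EE Pl I0"
    by (simp only: fmul_eq absUq_diff absUq_mult absUq_gens flip.simps right_minus_eq)
  have "abs_QUq (\<lambda>q. gen (E Mi I0) \<cdot> gen (E (flip Mi) I1) - gen (E (flip Mi) I1) \<cdot> gen (E Mi I0)) = 0"
    by (rule absUq_rel) (rule relUq.intros)
  then have "EE Mi I0 * EE Pl I1 = EE Pl I1 * EE Mi I0"
    by (simp only: fmul_eq absUq_diff absUq_mult absUq_gens flip.simps right_minus_eq)
  then show "EE Pl I1 * EE Mi I0 = EE Mi I0 * EE Pl I1" by (rule sym)
qed

lemma serreUq: "i \<noteq> j \<Longrightarrow> serreR TT (EE s i) (EE s j) = 0"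
proof -
  assume ij: "i \<noteq> j"
  have "abs_QUq (\<lambda>q. serre q (gen (E s i)) (gen (E s j))) = 0"
    by (rule absUq_rel, rule relUq.intros(8), rule ij)
  then show ?thesis
    by (simp only: serre_def serreR_def fmul_eq absUq_diff absUq_add absUq_mult absUq_cst absUq_gens scUq_fold)
qed

lemmas phiR0 = KK_KI KI_KK KK01 Kcomm EK_same EK_diff cenUq scal_orderUq QQ_QI QI_QQ DD_QQ DD_CC EPM EPM_cross
lemmas phiR = phiR0 phiR0[THEN ctx]

definition YP :: "ix \<Rightarrow> 'k::field QUq" where "YP i = KI i - CC * (KI i * EE Pl i)"
definition YM :: "ix \<Rightarrow> 'k::field QUq" where "YM i = KI i + EE Mi i"

lemma c3:
  "KK I0 * KK I1 * YP i = YP i * KK I0 * KK I1" "KK I0 * KK I1 * YM i = YM i * KK I0 * KK I1"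
  "KK I0 * KK I1 * KK i = KK i * KK I0 * KK I1" "KK I0 * KK I1 * KI i = KI i * KK I0 * KK I1"
  by (cases i; simp add: YP_def YM_def algebra_simps phiR)+

lemma c4: "DD * (QQ * YP i * KK i - QI * KK i * YP i) - 1 = 0"
  by (simp add: YP_def algebra_simps phiR)

lemma c5: "DD * (QQ * KK i * YM i - QI * YM i * KK i) - 1 = 0"
  by (simp add: YM_def algebra_simps phiR)

lemma c6: "DD * (QQ * YM i * YP i - QI * YP i * YM i) - 1 = 0"
  by (simp add: YM_def YP_def algebra_simps phiR)

lemma c7: "i \<noteq> j \<Longrightarrow> DD * (QQ * YP i * YM j - QI * YM j * YP i) - KI I0 * KI I1 = 0"
  by (cases i; cases j) (simp_all add: YM_def YP_def algebra_simps phiR)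


lemma c8m: assumes ij: "i \<noteq> j" shows "serreR TT (YM i) (YM j) = 0"
proof -
  have T: "TT = QI*QI + 1 + QQ*QQ" by (simp add: TT_eq add_ac)
  have "serreR TT (YM i) (YM j) = serreR (QI*QI + 1 + QQ*QQ) (KI i + EE Mi i) (KI j + EE Mi j)"
    by (simp add: T YM_def)
  also have "\<dots> = serreR (QI*QI + 1 + QQ*QQ) (EE Mi i) (EE Mi j)"
    using ij by (intro AS1; cases i; cases j; simp add: phiR mult.assoc)
  also have "\<dots> = 0" using serreUq[OF ij, of Mi] by (simp only: T)
  finally show ?thesis .
qed

lemma c8p: assumes ij: "i \<noteq> j" shows "serreR TT (YP i) (YP j) = 0"
proof -
  have "serreR TT (YP i) (YP j) = serreR (QQ*QQ + 1 + QI*QI) (KI i + (-CC)*(KI i * EE Pl i)) (KI j + (-CC)*(KI j * EE Pl j))"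
    by (simp add: TT_eq YP_def)
  also have "\<dots> = serreR (QQ*QQ + 1 + QI*QI) ((-CC)*(KI i * EE Pl i)) ((-CC)*(KI j * EE Pl j))"
    using ij by (intro AS1; cases i; cases j; simp add: phiR mult.assoc)
  also have "\<dots> = (-CC)*((-CC)*((-CC)*((-CC)*(KI i*(KI i*(KI i*(KI j*serreR (QQ*QQ + 1 + QI*QI) (EE Pl i) (EE Pl j))))))))"
    using ij by (intro AS2; cases i; cases j; simp add: phiR mult.assoc)
  also have "\<dots> = 0"
  proof -
    have S0: "serreR (QQ*QQ + 1 + QI*QI) (EE Pl i) (EE Pl j) = 0"
      using serreUq[OF ij, of Pl] by (simp only: TT_eq)
    show ?thesis by (simp only: S0 mult_zero_right)
  qed
  finally show ?thesis .
qed

definition QQu :: "'k::field QU" where "QQu = scU (\<lambda>q. q)"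
definition QIu :: "'k::field QU" where "QIu = scU (\<lambda>q. inverse q)"
definition DDu :: "'k::field QU" where "DDu = scU (\<lambda>q. 1 / (q - inverse q))"
definition CCu :: "'k::field QU" where "CCu = scU (\<lambda>q. q * (q - inverse q) ^ 2)"
definition TTu :: "'k::field QU" where "TTu = scU (\<lambda>q. qint q 3)"
lemma QQ_QIu: "QQu * QIu = (1 :: 'k::field QU)"
proof -
  have "QQu * QIu = scU (\<lambda>q. q * inverse q :: 'k)" by (simp add: scU_mult QQu_def QIu_def)
  also have "\<dots> = scU (\<lambda>q. 1)" by (rule scU_cong) (simp add: goodq_def)
  finally show ?thesis by (simp add: scU_one)
qed
lemma QI_QQu: "QIu * QQu = (1 :: 'k::field QU)"
  using QQ_QIu by (metis QQu_def scU_central)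

lemma DD_QQu: "DDu * QQu = (1 :: 'k::field QU) + DDu * QIu"
proof -
  have "DDu * QQu - DDu * QIu = scU (\<lambda>q. 1 / (q - inverse q) * q - 1 / (q - inverse q) * inverse q :: 'k)"
    by (simp only: DDu_def QQu_def QIu_def scU_mult[symmetric] scU_diff[symmetric])
  also have "\<dots> = scU (\<lambda>q. 1)"
  proof (rule scU_cong)
    fix q :: 'k assume "goodq q"
    then have q1: "q - inverse q \<noteq> 0" using goodq_D by blast
    have "1 / (q - inverse q) * q - 1 / (q - inverse q) * inverse q = 1 / (q - inverse q) * (q - inverse q)"
      by (simp add: right_diff_distrib)
    then show "1 / (q - inverse q) * q - 1 / (q - inverse q) * inverse q = 1" using q1 by simp
  qed
  finally show ?thesis by (simp add: scU_one algebra_simps)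
qed

lemma DD_CCu: "DDu * CCu = QQu * QQu - (1 :: 'k::field QU)"
proof -
  have "DDu * CCu = scU (\<lambda>q. 1 / (q - inverse q) * (q * (q - inverse q) ^ 2) :: 'k)"
    by (simp only: DDu_def CCu_def scU_mult[symmetric])
  also have "\<dots> = scU (\<lambda>q. q * q - 1)"
  proof (rule scU_cong)
    fix q :: 'k assume "goodq q"
    then have q0: "q \<noteq> 0" and q1: "q - inverse q \<noteq> 0" using goodq_D by blast+
    have "1 / (q - inverse q) * (q * (q - inverse q) ^ 2) = q * (q - inverse q)"
      using q1 by (simp add: power2_eq_square)
    also have "\<dots> = q * q - 1" using q0 by (simp add: right_diff_distrib)
    finally show "1 / (q - inverse q) * (q * (q - inverse q) ^ 2) = q * q - 1" .
  qed
  finally show ?thesis by (simp add: scU_one scU_diff scU_mult QQu_def)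
qed

lemma TT_equ: "TTu = QQu * QQu + 1 + QIu * (QIu :: 'k::field QU)"
proof -
  have "TTu = scU (\<lambda>q. q * q + 1 + inverse q * inverse q :: 'k)"
    unfolding TTu_def
  proof (rule scU_cong)
    fix q :: 'k assume g: "goodq q"
    then have q0: "q \<noteq> 0" and q1: "q - inverse q \<noteq> 0" by (auto simp: goodq_def)
    have qr: "q * inverse q = 1" using q0 by simp
    have e: "(q * q + 1 + inverse q * inverse q) * (q - inverse q) = q ^ 3 - inverse q ^ 3"
      using qr by algebra
    have "qint q 3 = (q ^ 3 - inverse q ^ 3) / (q - inverse q)" by (simp add: qint_def)
    also have "\<dots> = q * q + 1 + inverse q * inverse q" using q1 by (simp add: e[symmetric])
    finally show "qint q 3 = q * q + 1 + inverse q * inverse q" .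
  qed
  then show ?thesis by (simp add: scU_add scU_mult scU_one QQu_def QIu_def)
qed

lemma q2_Plu: "scU (\<lambda>q. q2 q Pl) = QQu * (QQu :: 'k::field QU)"
  by (simp add: QQu_def scU_mult[symmetric] power2_eq_square)
lemma q2_Miu: "scU (\<lambda>q. q2 q Mi) = QIu * (QIu :: 'k::field QU)"
  by (simp add: QIu_def scU_mult[symmetric] power2_eq_square)


lemma goodq_D2: "goodq q \<Longrightarrow> q * (q - inverse q) ^ 2 \<noteq> 0"
  using goodq_D by auto

definition KKu :: "ix \<Rightarrow> 'k::field QU" where "KKu i = abs_QU (\<lambda>q. gen (kp i))"
definition KIu :: "ix \<Rightarrow> 'k::field QU" where "KIu i = abs_QU (\<lambda>q. gen (km i))"
definition YPu :: "ix \<Rightarrow> 'k::field QU" where "YPu i = abs_QU (\<lambda>q. gen (Y Pl i))"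
definition YMu :: "ix \<Rightarrow> 'k::field QU" where "YMu i = abs_QU (\<lambda>q. gen (Y Mi i))"
definition DCu :: "'k::field QU" where "DCu = scU (\<lambda>q. 1 / (q * (q - inverse q) ^ 2))"

lemma absU_gens:
  "abs_QU (\<lambda>q. gen (kp i)) = KKu i" "abs_QU (\<lambda>q. gen (km i)) = KIu i"
  "abs_QU (\<lambda>q. gen (Y Pl i)) = YPu i" "abs_QU (\<lambda>q. gen (Y Mi i)) = YMu i"
  by (simp_all add: KKu_def KIu_def YPu_def YMu_def)

lemma scU_fold:
  "scU (\<lambda>q. q) = QQu" "scU (\<lambda>q. inverse q) = QIu" "scU (\<lambda>q. 1 / (q - inverse q)) = DDu"
  "scU (\<lambda>q. q * (q - inverse q) ^ 2) = CCu" "scU (\<lambda>q. qint q 3) = TTu"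
  "scU (\<lambda>q. 1 / (q * (q - inverse q) ^ 2)) = DCu"
  by (simp_all add: QQu_def QIu_def DDu_def CCu_def TTu_def DCu_def)

lemma CC_DCu: "CCu * DCu = (1 :: 'k::field QU)"
proof -
  have "CCu * DCu = scU (\<lambda>q. q * (q - inverse q) ^ 2 * (1 / (q * (q - inverse q) ^ 2)) :: 'k)"
    by (simp only: CCu_def DCu_def scU_mult[symmetric])
  also have "\<dots> = scU (\<lambda>q. 1)" by (rule scU_cong) (use goodq_D2 in auto)
  finally show ?thesis by (simp add: scU_one)
qed
lemma DC_CCu: "DCu * CCu = (1 :: 'k::field QU)"
  using CC_DCu by (metis DCu_def scU_central)

lemma DC_QQ2u: "DCu * (QQu * (QQu * z)) = DDu * z + DCu * (z :: 'k::field QU)"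
proof -
  have "DCu * (QQu * QQu) = scU (\<lambda>q. 1 / (q * (q - inverse q) ^ 2) * (q * q) :: 'k)"
    by (simp only: DCu_def QQu_def scU_mult[symmetric])
  also have "\<dots> = scU (\<lambda>q. 1 / (q - inverse q) + 1 / (q * (q - inverse q) ^ 2))"
  proof (rule scU_cong)
    fix q :: 'k assume "goodq q"
    then have q0: "q \<noteq> 0" and q1: "q - inverse q \<noteq> 0" using goodq_D by blast+
    have qr: "q * inverse q = 1" using q0 by simp
    define x where "x = q - inverse q"
    have x0: "x \<noteq> 0" using q1 x_def by simp
    have e: "q * q = q * x + 1" using qr by (simp add: x_def right_diff_distrib)
    have "1 / (q * x ^ 2) * (q * q) = (q * x + 1) / (q * x ^ 2)" by (simp add: e)
    also have "\<dots> = (q * x) / (q * x ^ 2) + 1 / (q * x ^ 2)" by (simp add: add_divide_distrib)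
    also have "(q * x) / (q * x ^ 2) = 1 / x" using q0 x0 by (simp add: power2_eq_square)
    finally show "1 / (q * (q - inverse q) ^ 2) * (q * q) = 1 / (q - inverse q) + 1 / (q * (q - inverse q) ^ 2)"
      by (simp add: x_def)
  qed
  also have "\<dots> = DDu + DCu" by (simp only: scU_add DDu_def DCu_def)
  finally have "DCu * (QQu * QQu) = DDu + (DCu :: 'k QU)" .
  then have "DCu * (QQu * QQu) * z = (DDu + DCu) * z" by simp
  then show ?thesis by (simp only: mult.assoc distrib_right)
qed

lemma QmQi_DDu: "(QQu - QIu) * DDu = (1 :: 'k::field QU)"
proof -
  have c1: "QQu * DDu = DDu * (QQu :: 'k QU)" unfolding QQu_def DDu_def by (rule scU_central)
  have c2: "QIu * DDu = DDu * (QIu :: 'k QU)" unfolding QIu_def DDu_def by (rule scU_central)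
  have "(QQu - QIu) * DDu = DDu * QQu - DDu * (QIu :: 'k QU)"
    by (simp only: left_diff_distrib c1 c2)
  then show ?thesis by (simp add: DD_QQu)
qed

lemma cenU:
  "KKu i * QQu = QQu * KKu i"
  "KKu i * QIu = QIu * KKu i"
  "KKu i * DDu = DDu * KKu i"
  "KKu i * CCu = CCu * KKu i"
  "KKu i * DCu = DCu * KKu i"
  "KIu i * QQu = QQu * KIu i"
  "KIu i * QIu = QIu * KIu i"
  "KIu i * DDu = DDu * KIu i"
  "KIu i * CCu = CCu * KIu i"
  "KIu i * DCu = DCu * KIu i"
  "YPu i * QQu = QQu * YPu i"
  "YPu i * QIu = QIu * YPu i"
  "YPu i * DDu = DDu * YPu i"
  "YPu i * CCu = CCu * YPu i"
  "YPu i * DCu = DCu * YPu i"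
  "YMu i * QQu = QQu * YMu i"
  "YMu i * QIu = QIu * YMu i"
  "YMu i * DDu = DDu * YMu i"
  "YMu i * CCu = CCu * YMu i"
  "YMu i * DCu = DCu * YMu i"
  by (simp_all add: QQu_def QIu_def DDu_def CCu_def DCu_def scU_central)

lemma scal_orderU:
  "CCu * DDu = DDu * CCu" "DCu * DDu = DDu * DCu" "QQu * DDu = DDu * QQu" "QQu * CCu = CCu * QQu" "QQu * DCu = DCu * QQu" "QIu * DDu = DDu * QIu" "QIu * CCu = CCu * QIu" "QIu * DCu = DCu * QIu"
  unfolding QQu_def QIu_def DDu_def CCu_def DCu_def by (rule scU_central)+


lemma solve_rel:
  fixes A B Q Qi :: "'a::{ring,monoid_mult}"
  assumes "Q*A - Qi*B = Q - Qi" "Qi*Q = 1"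
  shows "A = Qi*(Qi*B) + 1 - Qi*Qi"
proof -
  have "A = Qi*(Q*A)" by (simp add: mult.assoc[symmetric] assms(2))
  also have "Q*A = Q - Qi + Qi*B" using assms(1) by (simp add: algebra_simps)
  finally show ?thesis by (simp add: algebra_simps assms(2))
qed

lemma solve_rel2:
  fixes A B Q Qi :: "'a::{ring,monoid_mult}"
  assumes "Q*A - Qi*B = Q - Qi" "Q*Qi = 1"
  shows "B = Q*(Q*A) - Q*Q + 1"
proof -
  have "B = Q*(Qi*B)" by (simp add: mult.assoc[symmetric] assms(2))
  also have "Qi*B = Q*A - Q + Qi" using assms(1) by (simp add: algebra_simps)
  finally show ?thesis by (simp add: algebra_simps assms(2))
qed

lemma solve_rel3:
  fixes A B Q Qi Z :: "'a::{ring,monoid_mult}"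
  assumes "Q*A - Qi*B = (Q - Qi)*Z" "Qi*Q = 1"
  shows "A = Qi*(Qi*B) + Z - Qi*(Qi*Z)"
proof -
  have "A = Qi*(Q*A)" by (simp add: mult.assoc[symmetric] assms(2))
  also have "Q*A = (Q - Qi)*Z + Qi*B" using assms(1) by (simp add: algebra_simps)
  finally have "A = Qi * ((Q - Qi) * Z + Qi * B)" .
  moreover have qz: "Qi*(Q*Z) = Z" by (simp add: mult.assoc[symmetric] assms(2))
  ultimately show ?thesis by (simp add: algebra_simps qz)
qed

lemma yki:
  fixes k ki y a ai b :: "'a::{ring,monoid_mult}"
  assumes kki: "k*ki = 1" and kik: "ki*k = 1" and r: "y*k = a*(k*y) + b" and aia: "ai*a = 1"
    and ca: "\<And>x. ai*x = x*ai" and cb: "\<And>x. b*x = x*b"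
  shows "y*ki = ai*(ki*y) - ai*(b*(ki*ki))"
proof -
  have ky: "k*y = ai*(y*k) - ai*b"
  proof -
    have "ai*(y*k) = (ai*a)*(k*y) + ai*b" using r by (simp add: algebra_simps mult.assoc)
    then show ?thesis using aia by simp
  qed
  have "y*ki = ki*(k*y)*ki" using kik by (simp add: mult.assoc[symmetric])
  also have "\<dots> = ki*(ai*(y*(k*ki)) - ai*b*ki)" by (simp add: ky algebra_simps mult.assoc)
  also have "\<dots> = ki*(ai*y) - ki*(ai*(b*ki))" using kki by (simp add: algebra_simps mult.assoc)
  also have "\<dots> = ai*(ki*y) - ai*(b*(ki*ki))"
  proof -
    have 1: "ki*(ai*y) = ai*(ki*y)" using ca[of ki] by (simp only: mult.assoc[symmetric])
    have "ki*(ai*(b*ki)) = (ki*ai)*(b*ki)" by (simp only: mult.assoc)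
    also have "\<dots> = ai*((ki*b)*ki)" by (simp only: mult.assoc ca[of ki, symmetric])
    also have "\<dots> = ai*(b*(ki*ki))" by (simp only: mult.assoc cb[of ki, symmetric])
    finally show ?thesis using 1 by simp
  qed
  finally show ?thesis .
qed

lemma KKu_KIu: "KKu i * KIu i = 1"
proof -
  have "abs_QU (\<lambda>q. gen (kp i) \<cdot> gen (km i) - fone) = 0"
    by (rule absU_rel) (rule relU.intros)
  then show ?thesis by (simp only: fmul_eq fone_eq absU_diff absU_mult absU_one absU_gens right_minus_eq)
qed

lemma KIu_KKu: "KIu i * KKu i = 1"
proof -
  have "abs_QU (\<lambda>q. gen (km i) \<cdot> gen (kp i) - fone) = 0"
    by (rule absU_rel) (rule relU.intros)
  then show ?thesis by (simp only: fmul_eq fone_eq absU_diff absU_mult absU_one absU_gens right_minus_eq)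
qed

lemma Zc_gen: "KKu I0 * KKu I1 * abs_QU (\<lambda>q. gen g) = abs_QU (\<lambda>q. gen g) * KKu I0 * KKu I1"
proof -
  have "abs_QU (\<lambda>q. gen (kp I0) \<cdot> gen (kp I1) \<cdot> gen g - gen g \<cdot> gen (kp I0) \<cdot> gen (kp I1)) = 0"
    by (rule absU_rel) (rule relU.intros)
  then show ?thesis by (simp only: fmul_eq absU_diff absU_mult absU_gens right_minus_eq)
qed

lemma Zc: "KKu I0 * KKu I1 * KKu i = KKu i * KKu I0 * KKu I1" "KKu I0 * KKu I1 * KIu i = KIu i * KKu I0 * KKu I1"
  "KKu I0 * KKu I1 * YPu i = YPu i * KKu I0 * KKu I1" "KKu I0 * KKu I1 * YMu i = YMu i * KKu I0 * KKu I1"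
  using Zc_gen[of "kp i"] Zc_gen[of "km i"] Zc_gen[of "Y Pl i"] Zc_gen[of "Y Mi i"]
  by (simp_all only: absU_gens)

lemma KK01u: "KKu I1 * KKu I0 = KKu I0 * KKu I1"
proof -
  have "KIu I0 * (KKu I0 * KKu I1 * KKu I0) = KIu I0 * (KKu I0 * KKu I0 * KKu I1)"
    by (simp only: Zc(1))
  then show ?thesis by (simp add: mult.assoc[symmetric] KIu_KKu)
qed

lemma Kcommu:
  "KKu I1 * KIu I0 = KIu I0 * KKu I1" "KIu I1 * KKu I0 = KKu I0 * KIu I1" "KIu I1 * KIu I0 = KIu I0 * KIu I1"
proof -
  show 1: "KKu I1 * KIu I0 = KIu I0 * KKu I1"
    by (rule comm_inv[OF KK01u KKu_KIu KIu_KKu])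
  have "KKu I0 * KIu I1 = KIu I1 * KKu I0"
    by (rule comm_inv[OF KK01u[symmetric] KKu_KIu KIu_KKu])
  then show 2: "KIu I1 * KKu I0 = KKu I0 * KIu I1" by (rule sym)
  have "KIu I0 * KIu I1 = KIu I1 * KIu I0"
    by (rule comm_inv[OF 1[symmetric] KKu_KIu KIu_KKu])
  then show "KIu I1 * KIu I0 = KIu I0 * KIu I1" by (rule sym)
qed

lemma D_solve: assumes "DDu * X - 1 = 0" shows "X = QQu - (QIu :: 'k::field QU)"
proof -
  have "X = ((QQu - QIu) * DDu) * X" by (simp add: QmQi_DDu)
  also have "\<dots> = (QQu - QIu) * (DDu * X)" by (simp only: mult.assoc)
  also have "DDu * X = 1" using assms by simp
  finally show ?thesis by simp
qed

lemma D_solve2: assumes "DDu * X - Z = 0" shows "X = (QQu - QIu) * (Z :: 'k::field QU)"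
proof -
  have "X = ((QQu - QIu) * DDu) * X" by (simp add: QmQi_DDu)
  also have "\<dots> = (QQu - QIu) * (DDu * X)" by (simp only: mult.assoc)
  also have "DDu * X = Z" using assms by simp
  finally show ?thesis .
qed

lemmas pushU = fmul_eq fone_eq absU_diff absU_add absU_mult absU_cst absU_one absU_gens scU_fold

lemma u4: "QQu*(YPu i*KKu i) - QIu*(KKu i*YPu i) = QQu - QIu"
proof -
  have "abs_QU (\<lambda>q. cst (1 / (q - inverse q)) \<cdot> (cst q \<cdot> gen (Y Pl i) \<cdot> gen (kp i) - cst (inverse q) \<cdot> gen (kp i) \<cdot> gen (Y Pl i)) - fone) = 0"
    by (rule absU_rel) (rule relU.intros)
  then have "DDu * (QQu * YPu i * KKu i - QIu * KKu i * YPu i) - 1 = 0" by (simp only: pushU)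
  then have "QQu * YPu i * KKu i - QIu * KKu i * YPu i = QQu - QIu" by (rule D_solve)
  then show ?thesis by (simp only: mult.assoc)
qed

lemma u5: "QQu*(KKu i*YMu i) - QIu*(YMu i*KKu i) = QQu - QIu"
proof -
  have "abs_QU (\<lambda>q. cst (1 / (q - inverse q)) \<cdot> (cst q \<cdot> gen (kp i) \<cdot> gen (Y Mi i) - cst (inverse q) \<cdot> gen (Y Mi i) \<cdot> gen (kp i)) - fone) = 0"
    by (rule absU_rel) (rule relU.intros)
  then have "DDu * (QQu * KKu i * YMu i - QIu * YMu i * KKu i) - 1 = 0" by (simp only: pushU)
  then have "QQu * KKu i * YMu i - QIu * YMu i * KKu i = QQu - QIu" by (rule D_solve)
  then show ?thesis by (simp only: mult.assoc)
qed

lemma u6: "QQu*(YMu i*YPu i) - QIu*(YPu i*YMu i) = QQu - QIu"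
proof -
  have "abs_QU (\<lambda>q. cst (1 / (q - inverse q)) \<cdot> (cst q \<cdot> gen (Y Mi i) \<cdot> gen (Y Pl i) - cst (inverse q) \<cdot> gen (Y Pl i) \<cdot> gen (Y Mi i)) - fone) = 0"
    by (rule absU_rel) (rule relU.intros)
  then have "DDu * (QQu * YMu i * YPu i - QIu * YPu i * YMu i) - 1 = 0" by (simp only: pushU)
  then have "QQu * YMu i * YPu i - QIu * YPu i * YMu i = QQu - QIu" by (rule D_solve)
  then show ?thesis by (simp only: mult.assoc)
qed

lemma u7: assumes ij: "i \<noteq> j"
  shows "QQu*(YPu i*YMu j) - QIu*(YMu j*YPu i) = (QQu - QIu) * (KIu I0 * KIu I1)"
proof -
  have "abs_QU (\<lambda>q. cst (1 / (q - inverse q)) \<cdot> (cst q \<cdot> gen (Y Pl i) \<cdot> gen (Y Mi j) - cst (inverse q) \<cdot> gen (Y Mi j) \<cdot> gen (Y Pl i))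
     - gen (km I0) \<cdot> gen (km I1)) = 0"
    by (rule absU_rel, rule relU.intros(7), rule ij)
  then have "DDu * (QQu * YPu i * YMu j - QIu * YMu j * YPu i) - KIu I0 * KIu I1 = 0" by (simp only: pushU)
  then have "QQu * YPu i * YMu j - QIu * YMu j * YPu i = (QQu - QIu) * (KIu I0 * KIu I1)" by (rule D_solve2)
  then show ?thesis by (simp only: mult.assoc)
qed

lemma u8: assumes ij: "i \<noteq> j" shows "serreR TTu (abs_QU (\<lambda>q. gen (Y s i))) (abs_QU (\<lambda>q. gen (Y s j))) = 0"
proof -
  have "abs_QU (\<lambda>q. serre q (gen (Y s i)) (gen (Y s j))) = 0"
    by (rule absU_rel, rule relU.intros(8), rule ij)
  then show ?thesis
    by (simp only: serre_def serreR_def fmul_eq absU_diff absU_add absU_mult absU_cst scU_fold)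
qed

lemma YP_K: "YPu i * KKu i = QIu*(QIu*(KKu i*YPu i)) + 1 - QIu*QIu"
  by (rule solve_rel[OF u4 QI_QQu])
lemma YM_K: "YMu i * KKu i = QQu*(QQu*(KKu i*YMu i)) - QQu*QQu + 1"
  by (rule solve_rel2[OF u5 QQ_QIu])
lemma YM_YP: "YMu i * YPu i = QIu*(QIu*(YPu i*YMu i)) + 1 - QIu*QIu"
  by (rule solve_rel[OF u6 QI_QQu])
lemma YP_YM: "i \<noteq> j \<Longrightarrow> YPu i * YMu j = QIu*(QIu*(YMu j*YPu i)) + KIu I0 * KIu I1 - QIu*(QIu*(KIu I0 * KIu I1))"
  by (rule solve_rel3[OF u7 QI_QQu])

lemma cenQQ2u: "QQu*QQu*x = x*(QQu*QQu :: 'k::field QU)"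
proof -
  have c: "QQu*y = y*QQu" for y :: "'k QU" unfolding QQu_def by (rule scU_central)
  have "QQu*QQu*x = QQu*(QQu*x)" by (simp only: mult.assoc)
  also have "\<dots> = QQu*(x*QQu)" by (simp only: c)
  also have "\<dots> = (QQu*x)*QQu" by (simp only: mult.assoc)
  also have "\<dots> = (x*QQu)*QQu" by (simp only: c)
  finally show ?thesis by (simp only: mult.assoc)
qed
lemma cenQI2u: "QIu*QIu*x = x*(QIu*QIu :: 'k::field QU)"
proof -
  have c: "QIu*y = y*QIu" for y :: "'k QU" unfolding QIu_def by (rule scU_central)
  have "QIu*QIu*x = QIu*(QIu*x)" by (simp only: mult.assoc)
  also have "\<dots> = QIu*(x*QIu)" by (simp only: c)
  also have "\<dots> = (QIu*x)*QIu" by (simp only: mult.assoc)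
  also have "\<dots> = (x*QIu)*QIu" by (simp only: c)
  finally show ?thesis by (simp only: mult.assoc)
qed
lemma cen1QQ2u: "(1 - QQu*QQu)*x = x*(1 - QQu*QQu :: 'k::field QU)"
  by (simp only: left_diff_distrib right_diff_distrib mult_1_left mult_1_right cenQQ2u)
lemma cen1QI2u: "(1 - QIu*QIu)*x = x*(1 - QIu*QIu :: 'k::field QU)"
  by (simp only: left_diff_distrib right_diff_distrib mult_1_left mult_1_right cenQI2u)
lemma QI2QQ2u: "QIu*QIu*(QQu*QQu) = (1::'k::field QU)"
proof -
  have "QIu*QIu*(QQu*QQu) = QIu*(QIu*QQu)*(QQu::'k QU)" by (simp only: mult.assoc)
  then show ?thesis by (simp add: QI_QQu)
qed
lemma QQ2QI2u: "QQu*QQu*(QIu*QIu) = (1::'k::field QU)"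
proof -
  have "QQu*QQu*(QIu*QIu) = QQu*(QQu*QIu)*(QIu::'k QU)" by (simp only: mult.assoc)
  then show ?thesis by (simp add: QQ_QIu)
qed

lemma YP_KI: "YPu i * KIu i = QQu*QQu*(KIu i*YPu i) - QQu*QQu*((1 - QIu*QIu)*(KIu i*KIu i))"
proof (rule yki[OF KKu_KIu KIu_KKu _ QQ2QI2u cenQQ2u cen1QI2u])
  show "YPu i * KKu i = QIu * QIu * (KKu i * YPu i) + (1 - QIu * QIu)"
    by (simp add: YP_K mult.assoc)
qed

lemma YM_KI: "YMu i * KIu i = QIu*QIu*(KIu i*YMu i) - QIu*QIu*((1 - QQu*QQu)*(KIu i*KIu i))"
proof (rule yki[OF KKu_KIu KIu_KKu _ QI2QQ2u cenQI2u cen1QQ2u])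
  show "YMu i * KKu i = QQu * QQu * (KKu i * YMu i) + (1 - QQu * QQu)"
    by (simp add: YM_K mult.assoc)
qed

lemma Zc2: assumes "i \<noteq> j" and G: "G \<in> {YPu m, YMu m}"
  shows "KKu i * KKu j * G = G * (KKu i * KKu j)"
proof -
  have z: "KKu I0 * KKu I1 * G = G * (KKu I0 * KKu I1)" using G Zc by (auto simp: mult.assoc)
  have "(i = I0 \<and> j = I1) \<or> (i = I1 \<and> j = I0)" using assms(1) by (cases i; cases j) auto
  then show ?thesis
  proof
    assume "i = I0 \<and> j = I1" then show ?thesis using z by simp
  next
    assume "i = I1 \<and> j = I0" then show ?thesis using z by (simp only: KK01u)
  qed
qed

lemma cross_K: assumes "i \<noteq> j" and G: "G \<in> {YPu j, YMu j}"
  shows "G * KKu i = KKu i * (KKu j * (G * KIu j))"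
proof -
  have "G * KKu i = G * KKu i * (KKu j * KIu j)" by (simp add: KKu_KIu)
  also have "\<dots> = (G * (KKu i * KKu j)) * KIu j" by (simp only: mult.assoc)
  also have "\<dots> = (KKu i * KKu j * G) * KIu j" using Zc2[OF assms] by simp
  finally show ?thesis by (simp only: mult.assoc)
qed

lemma cross_KI: assumes ij: "i \<noteq> j" and G: "G \<in> {YPu j, YMu j}"
  shows "G * KIu i = KIu i * (KIu j * (G * KKu j))"
proof -
  have ji: "j \<noteq> i" using ij by simp
  have b1: "KKu j * KKu i * (KIu i * KIu j) = 1"
    by (simp add: mult.assoc KKu_KIu) (simp add: mult.assoc[symmetric] KKu_KIu)
  have b2: "KIu i * KIu j * (KKu j * KKu i) = 1"
    by (simp add: mult.assoc KIu_KKu) (simp add: mult.assoc[symmetric] KIu_KKu)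
  have zi: "G * (KIu i * KIu j) = KIu i * KIu j * G"
    by (rule comm_inv[OF _ b1 b2]) (use Zc2[OF ji G] in simp)
  have "G * KIu i = G * KIu i * (KIu j * KKu j)" by (simp add: KIu_KKu)
  also have "\<dots> = (G * (KIu i * KIu j)) * KKu j" by (simp only: mult.assoc)
  also have "\<dots> = (KIu i * KIu j * G) * KKu j" using zi by simp
  finally show ?thesis by (simp only: mult.assoc)
qed

lemma cross_rules: assumes "i \<noteq> j"
  shows "YPu j * KKu i = KKu i * (KKu j * (YPu j * KIu j))" "YMu j * KKu i = KKu i * (KKu j * (YMu j * KIu j))"
    "YPu j * KIu i = KIu i * (KIu j * (YPu j * KKu j))" "YMu j * KIu i = KIu i * (KIu j * (YMu j * KKu j))"
  using cross_K[OF assms] cross_KI[OF assms] by auto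

lemmas psiR0 = KKu_KIu KIu_KKu KK01u Kcommu cenU scal_orderU QQ_QIu QI_QQu DD_QQu CC_DCu DC_CCu
  YP_K YM_K YP_KI YM_KI cross_rules
lemmas psiR = psiR0 psiR0[THEN ctx] DC_QQ2u

definition EPu :: "ix \<Rightarrow> 'k::field QU" where "EPu i = DCu * (1 - KKu i * YPu i)"
definition EMu :: "ix \<Rightarrow> 'k::field QU" where "EMu i = YMu i - KIu i"

lemma s4a: "KKu i * EMu i * KIu i = QIu*QIu*EMu i"
  by (simp add: EMu_def algebra_simps psiR)
lemma s4b: "KKu i * EPu i * KIu i = QQu*QQu*EPu i"
  by (simp add: EPu_def algebra_simps psiR)
lemma s5a: "i \<noteq> j \<Longrightarrow> KKu i * EMu j * KIu i = QQu*QQu*EMu j"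
  by (cases i; cases j) (simp_all add: EMu_def algebra_simps psiR)
lemma s5b: "i \<noteq> j \<Longrightarrow> KKu i * EPu j * KIu i = QIu*QIu*EPu j"
  by (cases i; cases j) (simp_all add: EPu_def algebra_simps psiR)

lemma s6: "EPu i * EMu i - EMu i * EPu i - DDu * (KKu i - KIu i) = 0"
  by (simp add: EPu_def EMu_def algebra_simps psiR YM_YP YM_YP[THEN ctx])

lemma s7: "EPu I0 * EMu I1 - EMu I1 * EPu I0 = 0" "EMu I0 * EPu I1 - EPu I1 * EMu I0 = 0"
  by (simp_all add: EPu_def EMu_def algebra_simps psiR YP_YM YP_YM[THEN ctx])


lemma s8m: assumes ij: "i \<noteq> j" shows "serreR TTu (EMu i) (EMu j) = 0"
proof -
  have T: "TTu = QIu*QIu + 1 + QQu*QQu" by (simp add: TT_equ add_ac)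
  have Y: "YMu m = KIu m + EMu m" for m by (simp add: EMu_def)
  have "0 = serreR TTu (YMu i) (YMu j)" using u8[OF ij, of Mi] unfolding absU_gens by (rule sym)
  also have "\<dots> = serreR (QIu*QIu + 1 + QQu*QQu) (KIu i + EMu i) (KIu j + EMu j)"
    by (simp only: T Y)
  also have "\<dots> = serreR (QIu*QIu + 1 + QQu*QQu) (EMu i) (EMu j)"
    using ij by (intro AS1; cases i; cases j; simp add: EMu_def algebra_simps psiR)
  finally show ?thesis unfolding T by (rule sym)
qed

lemma s8p: assumes ij: "i \<noteq> j" shows "serreR TTu (EPu i) (EPu j) = 0"
proof -
  have Y: "YPu m = KIu m + (-CCu)*(KIu m * EPu m)" for m by (simp add: EPu_def algebra_simps psiR)
  let ?T = "QQu*QQu + 1 + QIu*QIu"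
  let ?S = "serreR ?T (EPu i) (EPu j)"
  have "0 = serreR TTu (YPu i) (YPu j)" using u8[OF ij, of Pl] unfolding absU_gens by (rule sym)
  also have "\<dots> = serreR ?T (KIu i + (-CCu)*(KIu i * EPu i)) (KIu j + (-CCu)*(KIu j * EPu j))"
    by (simp only: TT_equ Y)
  also have "\<dots> = serreR ?T ((-CCu)*(KIu i * EPu i)) ((-CCu)*(KIu j * EPu j))"
    using ij by (intro AS1; cases i; cases j; simp add: EPu_def algebra_simps psiR)
  also have "\<dots> = (-CCu)*((-CCu)*((-CCu)*((-CCu)*(KIu i*(KIu i*(KIu i*(KIu j*?S)))))))"
    using ij by (intro AS2; cases i; cases j; simp add: EPu_def algebra_simps psiR)
  finally have X: "(-CCu)*((-CCu)*((-CCu)*((-CCu)*(KIu i*(KIu i*(KIu i*(KIu j*?S))))))) = 0" by simp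
  have "?S = KKu j*(KKu i*(KKu i*(KKu i*(DCu*(DCu*(DCu*(DCu*((-CCu)*((-CCu)*((-CCu)*((-CCu)*(KIu i*(KIu i*(KIu i*(KIu j*?S)))))))))))))))"
    using ij by (cases i; cases j; simp add: psiR mult.assoc)
  also have "\<dots> = 0" by (simp only: X mult_zero_right)
  finally show ?thesis by (simp only: TT_equ)
qed

lemma phi_abs:
  "abs_QUq (\<lambda>q. phi q (kp i)) = KK i" "abs_QUq (\<lambda>q. phi q (km i)) = KI i"
  "abs_QUq (\<lambda>q. phi q (Y Mi i)) = YM i" "abs_QUq (\<lambda>q. phi q (Y Pl i)) = YP i"
  by (simp_all only: phi.simps fmul_eq absUq_diff absUq_add absUq_mult absUq_cst absUq_gens scUq_fold YM_def YP_def mult.assoc)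

lemma psi_abs:
  "abs_QU (\<lambda>q. psi q (Kp i)) = KKu i" "abs_QU (\<lambda>q. psi q (Km i)) = KIu i"
  "abs_QU (\<lambda>q. psi q (E Mi i)) = EMu i" "abs_QU (\<lambda>q. psi q (E Pl i)) = EPu i"
  by (simp_all only: psi.simps fmul_eq fone_eq absU_diff absU_add absU_mult absU_cst absU_one absU_gens scU_fold EMu_def EPu_def)

lemmas pushq = fmul_eq fone_eq subst_diff subst_add subst_mult subst_cst subst_gen subst_one serre_def
  absUq_diff absUq_add absUq_mult absUq_cst absUq_one absUq_gens scUq_fold phi_abs
lemmas pushu = fmul_eq fone_eq subst_diff subst_add subst_mult subst_cst subst_gen subst_one serre_def
  absU_diff absU_add absU_mult absU_cst absU_one absU_gens scU_fold psi_abs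

lemma phi_rel:
  assumes r: "r \<in> relU q0" and g: "goodq q0"
  shows "subst (phi q0) r \<in> ideal_gen (relUq q0)"
  using r
proof cases
  case (1 i)
  have "abs_QUq (\<lambda>q. subst (phi q) (gen (kp i) \<cdot> gen (km i) - fone)) = 0"
    by (simp only: pushq KK_KI) simp
  from absUq_eq0[OF this g] show ?thesis using 1 by simp
next
  case (2 i)
  have "abs_QUq (\<lambda>q. subst (phi q) (gen (km i) \<cdot> gen (kp i) - fone)) = 0"
    by (simp only: pushq KI_KK) simp
  from absUq_eq0[OF this g] show ?thesis using 2 by simp
next
  case (3 h)
  have "abs_QUq (\<lambda>q. subst (phi q) (gen (kp I0) \<cdot> gen (kp I1) \<cdot> gen h - gen h \<cdot> gen (kp I0) \<cdot> gen (kp I1))) = 0"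
  proof (cases h)
    case (Y s i) then show ?thesis by (cases s) (simp_all only: pushq c3 right_minus_eq)
  next
    case (kp i) then show ?thesis by (simp only: pushq c3 right_minus_eq)
  next
    case (km i) then show ?thesis by (simp only: pushq c3 right_minus_eq)
  qed
  from absUq_eq0[OF this g] show ?thesis using 3 by simp
next
  case (4 i)
  have "abs_QUq (\<lambda>q. subst (phi q) (cst (1 / (q - inverse q)) \<cdot> (cst q \<cdot> gen (Y Pl i) \<cdot> gen (kp i) - cst (inverse q) \<cdot> gen (kp i) \<cdot> gen (Y Pl i))
     - fone)) = 0"
    by (simp only: pushq c4)
  from absUq_eq0[OF this g] show ?thesis using 4 by simp
next
  case (5 i)
  have "abs_QUq (\<lambda>q. subst (phi q) (cst (1 / (q - inverse q)) \<cdot> (cst q \<cdot> gen (kp i) \<cdot> gen (Y Mi i) - cst (inverse q) \<cdot> gen (Y Mi i) \<cdot> gen (kp i))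
     - fone)) = 0"
    by (simp only: pushq c5)
  from absUq_eq0[OF this g] show ?thesis using 5 by simp
next
  case (6 i)
  have "abs_QUq (\<lambda>q. subst (phi q) (cst (1 / (q - inverse q)) \<cdot> (cst q \<cdot> gen (Y Mi i) \<cdot> gen (Y Pl i) - cst (inverse q) \<cdot> gen (Y Pl i) \<cdot> gen (Y Mi i))
     - fone)) = 0"
    by (simp only: pushq c6)
  from absUq_eq0[OF this g] show ?thesis using 6 by simp
next
  case (7 i j)
  have "abs_QUq (\<lambda>q. subst (phi q) (cst (1 / (q - inverse q)) \<cdot> (cst q \<cdot> gen (Y Pl i) \<cdot> gen (Y Mi j) - cst (inverse q) \<cdot> gen (Y Mi j) \<cdot> gen (Y Pl i))
     - gen (km I0) \<cdot> gen (km I1))) = 0"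
    by (simp only: pushq c7[OF 7(2)])
  from absUq_eq0[OF this g] show ?thesis using 7 by simp
next
  case (8 i j s)
  have "abs_QUq (\<lambda>q. subst (phi q) (serre q (gen (Y s i)) (gen (Y s j)))) = 0"
    by (cases s) (simp_all only: pushq c8p[OF 8(2), unfolded serreR_def] c8m[OF 8(2), unfolded serreR_def])
  from absUq_eq0[OF this g] show ?thesis using 8 by simp
qed


lemma psi_rel:
  assumes r: "r \<in> relUq q0" and g: "goodq q0"
  shows "subst (psi q0) r \<in> ideal_gen (relU q0)"
  using r
proof cases
  case (1 i)
  have "abs_QU (\<lambda>q. subst (psi q) (gen (Kp i) \<cdot> gen (Km i) - fone)) = 0"
    by (simp only: pushu KKu_KIu) simp
  from absU_eq0[OF this g] show ?thesis using 1 by simp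
next
  case (2 i)
  have "abs_QU (\<lambda>q. subst (psi q) (gen (Km i) \<cdot> gen (Kp i) - fone)) = 0"
    by (simp only: pushu KIu_KKu) simp
  from absU_eq0[OF this g] show ?thesis using 2 by simp
next
  case 3
  have "abs_QU (\<lambda>q. subst (psi q) (gen (Kp I0) \<cdot> gen (Kp I1) - gen (Kp I1) \<cdot> gen (Kp I0))) = 0"
    by (simp only: pushu KK01u) simp
  from absU_eq0[OF this g] show ?thesis using 3 by simp
next
  case (4 i s)
  have "abs_QU (\<lambda>q. subst (psi q) (gen (Kp i) \<cdot> gen (E s i) \<cdot> gen (Km i) - cst (q2 q s) \<cdot> gen (E s i))) = 0"
    by (cases s) (simp_all only: pushu q2_Plu q2_Miu s4a s4b right_minus_eq)
  from absU_eq0[OF this g] show ?thesis using 4 by simp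
next
  case (5 i j s)
  have "abs_QU (\<lambda>q. subst (psi q) (gen (Kp i) \<cdot> gen (E s j) \<cdot> gen (Km i) - cst (q2 q (flip s)) \<cdot> gen (E s j))) = 0"
    by (cases s) (simp_all only: pushu flip.simps q2_Plu q2_Miu s5a[OF 5(2)] s5b[OF 5(2)] right_minus_eq)
  from absU_eq0[OF this g] show ?thesis using 5 by simp
next
  case (6 i)
  have "abs_QU (\<lambda>q. subst (psi q) (gen (E Pl i) \<cdot> gen (E Mi i) - gen (E Mi i) \<cdot> gen (E Pl i)
     - cst (1 / (q - inverse q)) \<cdot> (gen (Kp i) - gen (Km i)))) = 0"
    by (simp only: pushu s6)
  from absU_eq0[OF this g] show ?thesis using 6 by simp
next
  case (7 s)
  have "abs_QU (\<lambda>q. subst (psi q) (gen (E s I0) \<cdot> gen (E (flip s) I1) - gen (E (flip s) I1) \<cdot> gen (E s I0))) = 0"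
    by (cases s) (simp_all only: pushu flip.simps s7)
  from absU_eq0[OF this g] show ?thesis using 7 by simp
next
  case (8 i j s)
  have "abs_QU (\<lambda>q. subst (psi q) (serre q (gen (E s i)) (gen (E s j)))) = 0"
    by (cases s) (simp_all only: pushu s8p[OF 8(2), unfolded serreR_def] s8m[OF 8(2), unfolded serreR_def])
  from absU_eq0[OF this g] show ?thesis using 8 by simp
qed

definition DCq :: "'k::field QUq" where "DCq = scUq (\<lambda>q. 1 / (q * (q - inverse q) ^ 2))"

lemma DCq_CC: "DCq * CC = (1 :: 'k::field QUq)"
proof -
  have "DCq * CC = scUq (\<lambda>q. 1 / (q * (q - inverse q) ^ 2) * (q * (q - inverse q) ^ 2) :: 'k)"
    by (simp only: CC_def DCq_def scUq_mult[symmetric])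
  also have "\<dots> = scUq (\<lambda>q. 1)" by (rule scUq_cong) (use goodq_D2 in auto)
  finally show ?thesis by (simp add: scUq_one)
qed

lemma psiphi_gen: "goodq q0 \<Longrightarrow> subst (psi q0) (phi q0 h) - gen h \<in> ideal_gen (relU q0)"
proof -
  assume g: "goodq q0"
  have "abs_QU (\<lambda>q. subst (psi q) (phi q h) - gen h) = 0"
  proof (cases h)
    case (Y s i)
    have YP: "KIu i - CCu * KIu i * EPu i = YPu i" by (simp add: EPu_def algebra_simps psiR)
    show ?thesis
    proof (cases s)
      case Pl then show ?thesis using Y by (simp only: pushu phi.simps YP diff_self absU_zero)
    next
      case Mi then show ?thesis using Y by (simp only: pushu phi.simps EMu_def) simp
    qed
  next
    case (kp i) then show ?thesis by (simp add: pushu phi.simps absU_zero)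
  next
    case (km i) then show ?thesis by (simp add: pushu phi.simps absU_zero)
  qed
  from absU_eq0[OF this g] show ?thesis by simp
qed

lemma phipsi_gen: "goodq q0 \<Longrightarrow> subst (phi q0) (psi q0 h) - gen h \<in> ideal_gen (relUq q0)"
proof -
  assume g: "goodq q0"
  have "abs_QUq (\<lambda>q. subst (phi q) (psi q h) - gen h) = 0"
  proof (cases h)
    case (E s i)
    have c: "DCq * (1 - KK i * YP i) = EE Pl i"
    proof -
      have e: "1 - KK i * YP i = CC * EE Pl i"
        by (simp add: YP_def algebra_simps phiR)
      have "DCq * (1 - KK i * YP i) = DCq * (CC * EE Pl i)" by (simp only: e)
      also have "\<dots> = (DCq * CC) * EE Pl i" by (simp only: mult.assoc)
      finally show ?thesis by (simp add: DCq_CC)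
    qed
    show ?thesis
    proof (cases s)
      case Pl then show ?thesis using E by (simp only: pushq psi.simps c DCq_def[symmetric] diff_self)
    next
      case Mi then show ?thesis using E by (simp only: pushq psi.simps YM_def) (simp add: absUq_zero)
    qed
  next
    case (Kp i) then show ?thesis by (simp add: pushq psi.simps absUq_zero)
  next
    case (Km i) then show ?thesis by (simp add: pushq psi.simps absUq_zero)
  qed
  from absUq_eq0[OF this g] show ?thesis by simp
qed


lemma goodq_of: assumes "(q::'k::field) \<noteq> 0" "\<forall>n>0. q ^ n \<noteq> 1" shows "goodq q"
proof -
  have "q - inverse q \<noteq> 0"
  proof
    assume "q - inverse q = 0"
    then have "q * q = q * inverse q" by simp
    then have "q ^ 2 = 1" using assms(1) by (simp add: power2_eq_square)
    then show False using assms(2) by auto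
  qed
  then show ?thesis using assms(1) by (simp add: goodq_def)
qed

theorem theorem2p1:
  fixes q :: "'k::field"
  assumes "alg_closed TYPE('k)"
    and "q \<noteq> 0"
    and "\<forall>n>0. q ^ n \<noteq> 1"
  shows "(\<forall>p \<in> ideal_gen (relU q). subst (phi q) p \<in> ideal_gen (relUq q))
       \<and> (\<forall>p \<in> ideal_gen (relUq q). subst (psi q) p \<in> ideal_gen (relU q))
       \<and> (\<forall>p. subst (psi q) (subst (phi q) p) - p \<in> ideal_gen (relU q))
       \<and> (\<forall>p. subst (phi q) (subst (psi q) p) - p \<in> ideal_gen (relUq q))"
proof -
  have g: "goodq q" using assms(2,3) by (rule goodq_of)
  have P1: "\<forall>p \<in> ideal_gen (relU q). subst (phi q) p \<in> ideal_gen (relUq q)"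
    using subst_ideal[of "relU q" "phi q" "relUq q"] phi_rel[OF _ g] by blast
  have P2: "\<forall>p \<in> ideal_gen (relUq q). subst (psi q) p \<in> ideal_gen (relU q)"
    using subst_ideal[of "relUq q" "psi q" "relU q"] psi_rel[OF _ g] by blast
  have P3: "\<forall>p. subst (psi q) (subst (phi q) p) - p \<in> ideal_gen (relU q)"
  proof
    fix p
    have "subst (\<lambda>h. subst (psi q) (phi q h)) p - subst gen p \<in> ideal_gen (relU q)"
      by (rule subst_cong[OF idl_ideal_gen psiphi_gen[OF g]])
    then show "subst (psi q) (subst (phi q) p) - p \<in> ideal_gen (relU q)"
      by (simp only: subst_comp subst_gen_id)
  qed
  have P4: "\<forall>p. subst (phi q) (subst (psi q) p) - p \<in> ideal_gen (relUq q)"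
  proof
    fix p
    have "subst (\<lambda>h. subst (phi q) (psi q h)) p - subst gen p \<in> ideal_gen (relUq q)"
      by (rule subst_cong[OF idl_ideal_gen phipsi_gen[OF g]])
    then show "subst (phi q) (subst (psi q) p) - p \<in> ideal_gen (relUq q)"
      by (simp only: subst_comp subst_gen_id)
  qed
  show ?thesis using P1 P2 P3 P4 by blast
qed

end
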